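(* Let $f_1,f_2$ be strongly hyperbolic functions. Let $C\in\mathcal{C}^-(f_1,f_2)$, $p\in C$, $q\notin C$, with $q$ not parallel to $p$. Then there is at most one $D\in\mathcal{C}^-(f_1,f_2)$ with $p,q\in D$ and $C\cap D=\{p\}$.
   Context: Identify $\mathbb{S}^1$ with $\mathbb{R}\cup\{\infty\}$, $\mathcal{P}=\mathbb{S}^1\times\mathbb{S}^1$, $\mathbb{R}^+=(0,\infty)$. Two points of $\mathcal{P}$ are parallel if they have the same first coordinate or the same second coordinate. A function $f:\mathbb{R}^+\to\mathbb{R}^+$ is strongly hyperbolic if: (1) $\lim_{x\to0+}f(x)=+\infty$, $\lim_{x\to+\infty}f(x)=0$; (2) $f$ strictly convex; (3) $\lim_{x\to+\infty}f(x+b)/f(x)=1$ for each $b\in\mathbb{R}$; (4) $f$ differentiable; (5) $\ln|f'|$ strictly convex. For $a>0$, $b,c\in\mathbb{R}$: $f_{a,b,c}(x)=af_1(x+b)+c$ for $x>-b$, $f_{a,b,c}(x)=-af_2(-x-b)+c$ for $x<-b$; $\overline{f_{a,b,c}}=\{(x,f_{a,b,c}(x)):x\ne-b\}\cup\{(-b,\infty),(\infty,c)\}$; $\overline{l_{s,t}}=\{(x,sx+t):x\in\mathbb{R}\}\cup\{(\infty,\infty)\}$; $\mathcal{C}^-(f_1,f_2)=\{\overline{f_{a,b,c}}:a>0,b,c\in\mathbb{R}\}\cup\{\overline{l_{s,t}}:s<0,t\in\mathbb{R}\}$. *)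

theory Defs
  imports "HOL-Analysis.Analysis"
begin

text \<open>The circle S^1 = R \<union> {\<infinity>}.\<close>
datatype ext = Fin real | Infty

type_synonym point = "ext \<times> ext"

definition parallel :: "point \<Rightarrow> point \<Rightarrow> bool" where
  "parallel p q \<longleftrightarrow> fst p = fst q \<or> snd p = snd q"

definition strictly_convex_on :: "real set \<Rightarrow> (real \<Rightarrow> real) \<Rightarrow> bool" where
  "strictly_convex_on S f \<longleftrightarrow>
     (\<forall>x\<in>S. \<forall>y\<in>S. \<forall>u::real. x \<noteq> y \<and> 0 < u \<and> u < 1 \<longrightarrow>
        f ((1 - u) * x + u * y) < (1 - u) * f x + u * f y)"

text \<open>Strongly hyperbolic functions R+ \<rightarrow> R+ (values outside (0,\<infinity>) are irrelevant).\<close>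
definition strongly_hyperbolic :: "(real \<Rightarrow> real) \<Rightarrow> bool" where
  "strongly_hyperbolic f \<longleftrightarrow>
     (\<forall>x>0. f x > 0) \<and>
     filterlim f at_top (at_right 0) \<and>
     (f \<longlongrightarrow> 0) at_top \<and>
     strictly_convex_on {0<..} f \<and>
     (\<forall>b::real. ((\<lambda>x. f (x + b) / f x) \<longlongrightarrow> 1) at_top) \<and>
     (\<forall>x>0. f differentiable (at x)) \<and>
     strictly_convex_on {0<..} (\<lambda>x. ln \<bar>deriv f x\<bar>)"

definition fabc :: "(real \<Rightarrow> real) \<Rightarrow> (real \<Rightarrow> real) \<Rightarrow> real \<Rightarrow> real \<Rightarrow> real \<Rightarrow> real \<Rightarrow> real" where
  "fabc f1 f2 a b c x = (if x > - b then a * f1 (x + b) + c else - a * f2 (- x - b) + c)"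

definition curve_fabc :: "(real \<Rightarrow> real) \<Rightarrow> (real \<Rightarrow> real) \<Rightarrow> real \<Rightarrow> real \<Rightarrow> real \<Rightarrow> point set" where
  "curve_fabc f1 f2 a b c =
     {(Fin x, Fin (fabc f1 f2 a b c x)) | x. x \<noteq> - b} \<union> {(Fin (- b), Infty), (Infty, Fin c)}"

definition curve_line :: "real \<Rightarrow> real \<Rightarrow> point set" where
  "curve_line s t = {(Fin x, Fin (s * x + t)) | x. True} \<union> {(Infty, Infty)}"

definition Cminus :: "(real \<Rightarrow> real) \<Rightarrow> (real \<Rightarrow> real) \<Rightarrow> point set set" where
  "Cminus f1 f2 =
     {curve_fabc f1 f2 a b c | a b c. a > 0} \<union> {curve_line s t | s t. s < 0}"

end

theory Submission
  imports Defs
begin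

lemma sc_chord1:
  fixes \<phi> :: "real \<Rightarrow> real"
  assumes sc: "strictly_convex_on S \<phi>" and "a \<in> S" "c \<in> S" "a < b" "b < c"
  shows "(\<phi> b - \<phi> a)/(b-a) < (\<phi> c - \<phi> a)/(c-a)"
    and "(\<phi> c - \<phi> a)/(c-a) < (\<phi> c - \<phi> b)/(c-b)"
proof -
  define u where "u = (b-a)/(c-a)"
  have u0: "0 < u" "u < 1" using assms by (auto simp: u_def field_simps)
  have uc: "u*(c-a) = b - a" using assms by (simp add: u_def)
  have bu: "(1-u)*a + u*c = b" using uc by (simp add: algebra_simps)
  have "a \<noteq> c" using assms by auto
  then have key: "\<phi> b < (1-u)*\<phi> a + u*\<phi> c"
    using sc assms u0 unfolding strictly_convex_on_def bu[symmetric] by blast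
  have k1: "(\<phi> b - \<phi> a)*(c-a) < (\<phi> c - \<phi> a)*(b-a)"
  proof -
    have "(\<phi> b - \<phi> a) < u*(\<phi> c - \<phi> a)" using key by (simp add: algebra_simps)
    then have "(\<phi> b - \<phi> a)*(c-a) < u*(\<phi> c - \<phi> a)*(c-a)"
      using assms by (intro mult_strict_right_mono) auto
    also have "u*(\<phi> c - \<phi> a)*(c-a) = (\<phi> c - \<phi> a)*(b-a)"
      using assms by (simp add: u_def field_simps)
    finally show ?thesis .
  qed
  have k2: "(\<phi> c - \<phi> a)*(c-b) < (\<phi> c - \<phi> b)*(c-a)"
  proof -
    have "(1-u)*(\<phi> c - \<phi> a) < (\<phi> c - \<phi> b)" using key by (simp add: algebra_simps)
    then have "(1-u)*(\<phi> c - \<phi> a)*(c-a) < (\<phi> c - \<phi> b)*(c-a)"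
      using assms by (intro mult_strict_right_mono) auto
    also have "(1-u)*(\<phi> c - \<phi> a)*(c-a) = (\<phi> c - \<phi> a)*(c-b)"
      using assms by (simp add: u_def field_simps)
    finally show ?thesis .
  qed
  show "(\<phi> b - \<phi> a)/(b-a) < (\<phi> c - \<phi> a)/(c-a)"
    using k1 assms by (simp add: divide_simps mult.commute)
  show "(\<phi> c - \<phi> a)/(c-a) < (\<phi> c - \<phi> b)/(c-b)"
    using k2 assms by (simp add: divide_simps mult.commute)
qed

lemma sh_pos: "strongly_hyperbolic f \<Longrightarrow> x > 0 \<Longrightarrow> f x > 0"
  unfolding strongly_hyperbolic_def by auto

lemma sh_der: "strongly_hyperbolic f \<Longrightarrow> x > 0 \<Longrightarrow> (f has_real_derivative deriv f x) (at x)"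
  unfolding strongly_hyperbolic_def using DERIV_deriv_iff_real_differentiable by blast

lemma sh_cont: "strongly_hyperbolic f \<Longrightarrow> x > 0 \<Longrightarrow> isCont f x"
  using sh_der DERIV_isCont by blast

lemma sh_conv: "strongly_hyperbolic f \<Longrightarrow> strictly_convex_on {0<..} f"
  unfolding strongly_hyperbolic_def by auto

lemma sh_lnconv: "strongly_hyperbolic f \<Longrightarrow> strictly_convex_on {0<..} (\<lambda>x. ln \<bar>deriv f x\<bar>)"
  unfolding strongly_hyperbolic_def by auto

lemma sh_slope_left:
  assumes sh: "strongly_hyperbolic f" and "0 < x" "x < y"
  shows "deriv f x < (f y - f x)/(y-x)"
proof -
  have nonstrict: "deriv f x \<le> (f z - f x)/(z-x)" if xz: "x < z" for z
  proof (rule ccontr)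
    define S where "S = (f z - f x)/(z-x)"
    assume "\<not> ?thesis"
    then have DS: "deriv f x - S > 0" by (simp add: S_def)
    have "((\<lambda>w. f w - S*w) has_real_derivative (deriv f x - S)) (at x)"
      using sh_der[OF sh \<open>0<x\<close>] by (auto intro!: derivative_eq_intros)
    from DERIV_pos_inc_right[OF this DS] obtain d where d: "d > 0"
      "\<And>h. h > 0 \<Longrightarrow> h < d \<Longrightarrow> f x - S*x < f (x+h) - S*(x+h)" by blast
    obtain h where h: "h > 0" "h < d" "x + h < z"
      using field_lbound_gt_zero[of d "z-x"] d(1) xz by auto
    have "f x - S*x < f (x+h) - S*(x+h)" using d h by auto
    then have "S < (f (x+h) - f x)/((x+h)-x)" using h by (simp add: field_simps)
    moreover have "(f (x+h) - f x)/((x+h)-x) < (f z - f x)/(z-x)"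
      using sc_chord1(1)[OF sh_conv[OF sh], of x z "x+h"] h xz \<open>0<x\<close> by auto
    ultimately show False by (simp add: S_def)
  qed
  define m where "m = (x+y)/2"
  have "x < m" using \<open>x<y\<close> by (simp add: m_def)
  then have "deriv f x \<le> (f m - f x)/(m-x)" using nonstrict by blast
  also have "\<dots> < (f y - f x)/(y-x)"
    using sc_chord1(1)[OF sh_conv[OF sh], of x y m] assms by (auto simp: m_def)
  finally show ?thesis .
qed

lemma sh_slope_right:
  assumes sh: "strongly_hyperbolic f" and "0 < x" "x < y"
  shows "(f y - f x)/(y-x) < deriv f y"
proof -
  have nonstrict: "(f y - f z)/(y-z) \<le> deriv f y" if xz: "0 < z" "z < y" for z
  proof (rule ccontr)
    define S where "S = (f y - f z)/(y-z)"
    assume "\<not> ?thesis"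
    then have DS: "deriv f y - S < 0" by (simp add: S_def)
    have "((\<lambda>w. f w - S*w) has_real_derivative (deriv f y - S)) (at y)"
      using sh_der[OF sh, of y] that by (auto intro!: derivative_eq_intros)
    from DERIV_neg_dec_left[OF this DS] obtain d where d: "d > 0"
      "\<And>h. h > 0 \<Longrightarrow> h < d \<Longrightarrow> f y - S*y < f (y-h) - S*(y-h)" by blast
    obtain h where h: "h > 0" "h < d" "z < y - h"
      using field_lbound_gt_zero[of d "y-z"] d(1) xz by auto
    have "f y - S*y < f (y-h) - S*(y-h)" using d h by auto
    then have "(f y - f (y-h))/(y-(y-h)) < S" using h by (simp add: field_simps)
    moreover have "(f y - f z)/(y-z) < (f y - f (y-h))/(y-(y-h))"
      using sc_chord1(2)[OF sh_conv[OF sh], of z y "y-h"] h that by auto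
    ultimately show False by (simp add: S_def)
  qed
  define m where "m = (x+y)/2"
  have "(f y - f x)/(y-x) < (f y - f m)/(y-m)"
    using sc_chord1(2)[OF sh_conv[OF sh], of x y m] assms by (auto simp: m_def)
  also have "\<dots> \<le> deriv f y" using nonstrict[of m] assms by (simp add: m_def)
  finally show ?thesis .
qed


lemma sh_lim0: "strongly_hyperbolic f \<Longrightarrow> (f \<longlongrightarrow> 0) at_top"
  unfolding strongly_hyperbolic_def by auto

lemma sh_lim0_shift: "strongly_hyperbolic f \<Longrightarrow> ((\<lambda>Z. f (b + Z)) \<longlongrightarrow> 0) at_top"
proof -
  assume sh: "strongly_hyperbolic f"
  have "filterlim (\<lambda>Z. b + Z) at_top at_top"
    by (rule filterlim_tendsto_add_at_top[OF tendsto_const filterlim_ident])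
  from filterlim_compose[OF sh_lim0[OF sh] this] show ?thesis .
qed

lemma sh_deriv_neg:
  assumes sh: "strongly_hyperbolic f" and x: "0 < x"
  shows "deriv f x < 0"
proof (rule ccontr)
  assume "\<not> deriv f x < 0"
  then have d0: "deriv f x \<ge> 0" by simp
  have gt: "f x < f y" if "x < y" for y
  proof -
    have "0 < (f y - f x)/(y-x)" using sh_slope_left[OF sh x that] d0 by linarith
    then show ?thesis using that by (simp add: zero_less_divide_iff)
  qed
  have "eventually (\<lambda>y. f y < f x) at_top"
    using order_tendstoD(2)[OF sh_lim0[OF sh], of "f x"] sh_pos[OF sh x] by simp
  then obtain N where N: "\<And>y. y \<ge> N \<Longrightarrow> f y < f x"
    unfolding eventually_at_top_linorder by blast
  have "f (max N (x+1)) < f x" using N by simp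
  moreover have "f x < f (max N (x+1))" using gt by simp
  ultimately show False by simp
qed

lemma sh_dec:
  assumes sh: "strongly_hyperbolic f" and "0 < x" "x < y"
  shows "f y < f x"
proof -
  have "(f y - f x)/(y-x) < 0"
    using sh_slope_right[OF assms] sh_deriv_neg[OF sh, of y] assms by linarith
  then show ?thesis using assms by (simp add: divide_less_0_iff)
qed

lemma sh_dec_le:
  assumes sh: "strongly_hyperbolic f" and "0 < x" "x \<le> y"
  shows "f y \<le> f x"
  using sh_dec[OF sh, of x y] assms by (cases "x = y") auto

lemma sh_dmono:
  assumes sh: "strongly_hyperbolic f" and "0 < x" "x < y"
  shows "deriv f x < deriv f y"
  using sh_slope_left[OF assms] sh_slope_right[OF assms] by linarith

lemma sh_psi:
  assumes sh: "strongly_hyperbolic f" and "0 < x" "x < y" "0 < d"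
  shows "(- deriv f (x+d)) * (- deriv f y) < (- deriv f (y+d)) * (- deriv f x)"
proof -
  define \<psi> where "\<psi> = (\<lambda>x. ln \<bar>deriv f x\<bar>)"
  have sc: "strictly_convex_on {0<..} \<psi>" using sh_lnconv[OF sh] by (simp add: \<psi>_def)
  have c1: "(\<psi> (x+d) - \<psi> x)/((x+d)-x) < (\<psi> (y+d) - \<psi> x)/((y+d)-x)"
    using sc_chord1(1)[OF sc, of x "y+d" "x+d"] assms by auto
  have c2: "(\<psi> (y+d) - \<psi> x)/((y+d)-x) < (\<psi> (y+d) - \<psi> y)/((y+d)-y)"
    using sc_chord1(2)[OF sc, of x "y+d" y] assms by auto
  have "(\<psi> (x+d) - \<psi> x)/d < (\<psi> (y+d) - \<psi> y)/d" using c1 c2 by simp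
  then have "\<psi> (x+d) - \<psi> x < \<psi> (y+d) - \<psi> y" using assms by (simp add: divide_strict_right_mono_neg divide_less_cancel)
  then have lt: "\<psi> (x+d) + \<psi> y < \<psi> (y+d) + \<psi> x" by simp
  define G where "G = (\<lambda>x. - deriv f x)"
  have G: "\<And>t. t > 0 \<Longrightarrow> G t > 0" using sh_deriv_neg[OF sh] by (fastforce simp: G_def)
  have psi: "\<And>t. t > 0 \<Longrightarrow> \<psi> t = ln (G t)"
    unfolding \<psi>_def G_def using sh_deriv_neg[OF sh] by (simp add: abs_if)
  have "ln (G (x+d) * G y) = ln (G (x+d)) + ln (G y)"
    using G[of "x+d"] G[of y] assms by (simp add: ln_mult)
  also have "\<dots> < ln (G (y+d)) + ln (G x)" using lt psi assms by simp
  also have "\<dots> = ln (G (y+d) * G x)"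
    using G[of "y+d"] G[of x] assms by (simp add: ln_mult)
  finally have "ln (G (x+d) * G y) < ln (G (y+d) * G x)" .
  then have "G (x+d) * G y < G (y+d) * G x"
    using assms G[of "x+d"] G[of y] G[of "y+d"] G[of x] by simp
  then show ?thesis by (simp add: G_def)
qed

lemma sh_cauchy:
  assumes sh: "strongly_hyperbolic f" and "0 < s" "s < t" "0 < d" "0 < \<beta>"
  shows "\<beta> \<le> s \<Longrightarrow> (f s - f t) * (- deriv f (\<beta>+d)) < (f (s+d) - f (t+d)) * (- deriv f \<beta>)"
    and "t \<le> \<beta> \<Longrightarrow> (f (s+d) - f (t+d)) * (- deriv f \<beta>) < (f s - f t) * (- deriv f (\<beta>+d))"
proof -
  define G where "G = (\<lambda>x. - deriv f x)"
  have Gp: "\<And>x. x > 0 \<Longrightarrow> G x > 0" using sh_deriv_neg[OF sh] by (fastforce simp: G_def)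
  have "\<exists>\<xi>. s < \<xi> \<and> \<xi> < t \<and> (f t - f s) * deriv f (\<xi>+d) = (f (t+d) - f (s+d)) * deriv f \<xi>"
  proof (rule GMVT'[where f=f and g="\<lambda>z. f (z+d)" and f'="deriv f" and g'="\<lambda>z. deriv f (z+d)"])
    show "s < t" by fact
    show "isCont f z" if "s \<le> z" "z \<le> t" for z using sh_cont[OF sh] that assms by auto
    show "isCont (\<lambda>z. f (z+d)) z" if "s \<le> z" "z \<le> t" for z
      using DERIV_isCont[OF DERIV_shift[of f "deriv f (z+d)" z d, THEN iffD1, OF sh_der[OF sh, of "z+d"]]]
        that assms by auto
    show "(f has_real_derivative deriv f z) (at z)" if "s < z" "z < t" for z
      using sh_der[OF sh] that assms by auto
    show "((\<lambda>z. f (z+d)) has_real_derivative deriv f (z+d)) (at z)" if "s < z" "z < t" for z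
      using sh_der[OF sh, of "z+d"] that assms DERIV_shift[of f "deriv f (z+d)" z d] by auto
  qed
  then obtain \<xi> where xi: "s < \<xi>" "\<xi> < t" and eq0: "(f t - f s) * deriv f (\<xi>+d) = (f (t+d) - f (s+d)) * deriv f \<xi>"
    by blast
  define A where "A = f s - f t"
  define B where "B = f (s+d) - f (t+d)"
  have eq: "A * G (\<xi>+d) = B * G \<xi>" using eq0 by (simp add: A_def B_def G_def algebra_simps)
  have A: "A > 0" using sh_dec[OF sh, of s t] assms by (simp add: A_def)
  have B: "B > 0" using sh_dec[OF sh, of "s+d" "t+d"] assms by (simp add: B_def)
  show "\<beta> \<le> s \<Longrightarrow> (f s - f t) * (- deriv f (\<beta>+d)) < (f (s+d) - f (t+d)) * (- deriv f \<beta>)"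
  proof -
    assume "\<beta> \<le> s"
    then have p: "G (\<beta>+d) * G \<xi> < G (\<xi>+d) * G \<beta>"
      using sh_psi[OF sh, of \<beta> \<xi> d] xi assms by (simp add: G_def)
    have "(A * G (\<beta>+d)) * G \<xi> = A * (G (\<beta>+d) * G \<xi>)" by simp
    also have "\<dots> < A * (G (\<xi>+d) * G \<beta>)" using p A by (rule mult_strict_left_mono)
    also have "\<dots> = (B * G \<beta>) * G \<xi>" using eq by (simp add: algebra_simps)
    finally have "(A * G (\<beta>+d)) * G \<xi> < (B * G \<beta>) * G \<xi>" .
    then have "A * G (\<beta>+d) < B * G \<beta>" using Gp[of \<xi>] xi assms by (simp add: mult_less_cancel_right_pos)
    then show ?thesis by (simp add: A_def B_def G_def)
  qed
  show "t \<le> \<beta> \<Longrightarrow> (f (s+d) - f (t+d)) * (- deriv f \<beta>) < (f s - f t) * (- deriv f (\<beta>+d))"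
  proof -
    assume "t \<le> \<beta>"
    then have p: "G (\<xi>+d) * G \<beta> < G (\<beta>+d) * G \<xi>"
      using sh_psi[OF sh, of \<xi> \<beta> d] xi assms by (simp add: G_def)
    have "(B * G \<beta>) * G \<xi> = A * (G (\<xi>+d) * G \<beta>)" using eq by (simp add: algebra_simps)
    also have "\<dots> < A * (G (\<beta>+d) * G \<xi>)" using p A by (rule mult_strict_left_mono)
    also have "\<dots> = (A * G (\<beta>+d)) * G \<xi>" by simp
    finally have "(B * G \<beta>) * G \<xi> < (A * G (\<beta>+d)) * G \<xi>" .
    then have "B * G \<beta> < A * G (\<beta>+d)" using Gp[of \<xi>] xi assms by (simp add: mult_less_cancel_right_pos)
    then show ?thesis by (simp add: A_def B_def G_def)
  qed
qed


lemma sh_K: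
  assumes sh: "strongly_hyperbolic f" and b1: "0 < \<beta>1" and b12: "\<beta>1 < \<beta>2"
  shows "f \<beta>1 * (- deriv f \<beta>2) < f \<beta>2 * (- deriv f \<beta>1)"
proof -
  define d where "d = \<beta>2 - \<beta>1"
  have d: "d > 0" "\<beta>1 + d = \<beta>2" using b12 by (auto simp: d_def)
  define G where "G = (\<lambda>x. - deriv f x)"
  have c0: "(f \<beta>1 - f (\<beta>1+1)) * G \<beta>2 < (f \<beta>2 - f (\<beta>2+1)) * G \<beta>1"
    using sh_cauchy(1)[OF sh, of \<beta>1 "\<beta>1+1" d \<beta>1] d b1 by (simp add: G_def algebra_simps)
  define \<delta> where "\<delta> = (f \<beta>2 - f (\<beta>2+1)) * G \<beta>1 - (f \<beta>1 - f (\<beta>1+1)) * G \<beta>2"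
  have \<delta>: "\<delta> > 0" using c0 by (simp add: \<delta>_def)
  have ev: "eventually (\<lambda>Z. (f \<beta>1 - f (\<beta>1+Z)) * G \<beta>2 + \<delta> \<le> (f \<beta>2 - f (\<beta>2+Z)) * G \<beta>1) at_top"
    unfolding eventually_at_top_linorder
  proof (intro exI[of _ 2] allI impI)
    fix Z :: real assume Z: "2 \<le> Z"
    have "(f (\<beta>1+1) - f (\<beta>1+Z)) * G \<beta>2 < (f (\<beta>2+1) - f (\<beta>2+Z)) * G \<beta>1"
      using sh_cauchy(1)[OF sh, of "\<beta>1+1" "\<beta>1+Z" d \<beta>1] d b1 Z by (simp add: G_def algebra_simps)
    then show "(f \<beta>1 - f (\<beta>1+Z)) * G \<beta>2 + \<delta> \<le> (f \<beta>2 - f (\<beta>2+Z)) * G \<beta>1"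
      by (simp add: \<delta>_def algebra_simps)
  qed
  have l1: "((\<lambda>Z. (f \<beta>1 - f (\<beta>1+Z)) * G \<beta>2 + \<delta>) \<longlongrightarrow> (f \<beta>1 - 0) * G \<beta>2 + \<delta>) at_top"
    by (intro tendsto_intros sh_lim0_shift[OF sh])
  have l2: "((\<lambda>Z. (f \<beta>2 - f (\<beta>2+Z)) * G \<beta>1) \<longlongrightarrow> (f \<beta>2 - 0) * G \<beta>1) at_top"
    by (intro tendsto_intros sh_lim0_shift[OF sh])
  have "(f \<beta>1 - 0) * G \<beta>2 + \<delta> \<le> (f \<beta>2 - 0) * G \<beta>1"
    using tendsto_le[OF trivial_limit_at_top_linorder l2 l1 ev] .
  then show ?thesis using \<delta> by (simp add: G_def)
qed

lemma sh_R1: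
  assumes sh: "strongly_hyperbolic f" and "0 < \<beta>" "0 < Z"
  shows "f \<beta> - f (\<beta>+Z) < Z * (- deriv f \<beta>)"
proof -
  have "deriv f \<beta> < (f (\<beta>+Z) - f \<beta>)/((\<beta>+Z)-\<beta>)" using sh_slope_left[OF sh, of \<beta> "\<beta>+Z"] assms by simp
  then have "deriv f \<beta> * Z < f (\<beta>+Z) - f \<beta>" using assms by (simp add: less_divide_eq)
  then show ?thesis by (simp add: algebra_simps)
qed

lemma sh_R2:
  assumes sh: "strongly_hyperbolic f" and "0 < Z" "Z < \<beta>"
  shows "Z * (- deriv f \<beta>) < f (\<beta>-Z) - f \<beta>"
proof -
  have "(f \<beta> - f (\<beta>-Z))/(\<beta>-(\<beta>-Z)) < deriv f \<beta>" using sh_slope_right[OF sh, of "\<beta>-Z" \<beta>] assms by simp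
  then have "f \<beta> - f (\<beta>-Z) < deriv f \<beta> * Z" using assms by (simp add: divide_less_eq)
  then show ?thesis by (simp add: algebra_simps)
qed

lemma sh_small:
  assumes sh: "strongly_hyperbolic f" and "0 < \<delta>"
  shows "\<exists>y. 0 < y \<and> y < \<delta> \<and> M < f y"
proof -
  have "filterlim f at_top (at_right 0)" using sh unfolding strongly_hyperbolic_def by auto
  then have "eventually (\<lambda>x. M + 1 \<le> f x) (at_right 0)" unfolding filterlim_at_top by blast
  then obtain b where b: "b > 0" "\<And>y. y > 0 \<Longrightarrow> y < b \<Longrightarrow> M + 1 \<le> f y"
    unfolding eventually_at_right_field by auto
  obtain e where e: "e > 0" "e < b" "e < \<delta>" using field_lbound_gt_zero[of b \<delta>] b assms by auto
  show ?thesis using b(2)[of e] e by (intro exI[of _ e]) auto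
qed

lemma sh_large:
  assumes sh: "strongly_hyperbolic f" and "0 < \<epsilon>"
  shows "\<exists>y. T < y \<and> f y < \<epsilon>"
proof -
  have "eventually (\<lambda>y. f y < \<epsilon>) at_top"
    using order_tendstoD(2)[OF sh_lim0[OF sh], of \<epsilon>] assms by simp
  then obtain N where N: "\<And>y. y \<ge> N \<Longrightarrow> f y < \<epsilon>"
    unfolding eventually_at_top_linorder by blast
  show ?thesis using N[of "max N (T+1)"] by (intro exI[of _ "max N (T+1)"]) auto
qed

lemma sh_surj:
  assumes sh: "strongly_hyperbolic f" and w: "0 < w"
  shows "\<exists>t>0. f t = w"
proof -
  obtain y1 where y1: "0 < y1" "y1 < 1" "w < f y1" using sh_small[OF sh, of 1 w] by auto
  obtain y2 where y2: "1 < y2" "f y2 < w" using sh_large[OF sh w, of 1] by auto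
  have "\<exists>x. y1 \<le> x \<and> x \<le> y2 \<and> f x = w"
    by (rule IVT2) (use y1 y2 sh_cont[OF sh] in auto)
  then obtain x where "y1 \<le> x" "f x = w" by blast
  then show ?thesis using y1 by (intro exI[of _ x]) auto
qed

lemma sh_ratio:
  assumes sh: "strongly_hyperbolic f" and a: "0 < a" "a < a'" and e: "0 < e"
  shows "\<exists>y>0. a * f y = a' * f (y+e)"
proof -
  have fe: "f e > 0" using sh_pos[OF sh e] .
  obtain y1 where y1: "0 < y1" "y1 < 1" "a' * f e / a < f y1" using sh_small[OF sh, of 1 "a' * f e / a"] by auto
  have "a' * f e < a * f y1" using y1 a by (simp add: divide_less_eq mult.commute)
  moreover have "f (y1+e) < f e" using sh_dec[OF sh, of e "y1+e"] e y1 by simp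
  then have "a' * f (y1+e) < a' * f e" using a by simp
  ultimately have k1: "0 < a * f y1 - a' * f (y1+e)" by simp
  have lim: "((\<lambda>x. f (x + e) / f x) \<longlongrightarrow> 1) at_top" using sh unfolding strongly_hyperbolic_def by auto
  have "a / a' < 1" using a by simp
  from order_tendstoD(1)[OF lim this] obtain N where N: "\<And>x. x \<ge> N \<Longrightarrow> a / a' < f (x+e) / f x"
    unfolding eventually_at_top_linorder by blast
  define y2 where "y2 = max N (y1+1)"
  have y2: "y2 > y1" "y2 \<ge> N" by (auto simp: y2_def)
  have fy2: "f y2 > 0" using sh_pos[OF sh, of y2] y2 y1 by simp
  have "a / a' < f (y2+e) / f y2" using N y2 by simp
  then have "a * f y2 < a' * f (y2+e)" using fy2 a by (simp add: divide_simps mult.commute)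
  then have k2: "a * f y2 - a' * f (y2+e) < 0" by simp
  have "\<exists>x. y1 \<le> x \<and> x \<le> y2 \<and> a * f x - a' * f (x+e) = 0"
  proof (rule IVT2)
    show "a * f y2 - a' * f (y2+e) \<le> 0" using k2 by simp
    show "0 \<le> a * f y1 - a' * f (y1+e)" using k1 by simp
    show "y1 \<le> y2" using y2 by simp
    show "\<forall>x. y1 \<le> x \<and> x \<le> y2 \<longrightarrow> isCont (\<lambda>x. a * f x - a' * f (x+e)) x"
    proof (intro allI impI)
      fix x assume x: "y1 \<le> x \<and> x \<le> y2"
      have "isCont f x" using sh_cont[OF sh, of x] x y1 by simp
      moreover have "isCont (\<lambda>x. f (x+e)) x"
        using DERIV_isCont[OF DERIV_shift[of f "deriv f (x+e)" x e, THEN iffD1, OF sh_der[OF sh, of "x+e"]]]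
          x y1 e by simp
      ultimately show "isCont (\<lambda>x. a * f x - a' * f (x+e)) x" by (intro continuous_intros)
    qed
  qed
  then obtain x where "y1 \<le> x" "a * f x - a' * f (x+e) = 0" by blast
  then show ?thesis using y1 by (intro exI[of _ x]) auto
qed

lemma sh_mix:
  assumes sh: "strongly_hyperbolic f" and r: "0 < r2" "r2 < r1" and P: "0 \<le> P2" "P2 \<le> P1"
  shows "(P2 + f r2) / (- deriv f r2) < (P1 + f r1) / (- deriv f r1)"
proof -
  define G where "G = (\<lambda>x. - deriv f x)"
  have G: "G r1 > 0" "G r2 > 0" using sh_deriv_neg[OF sh, of r1] sh_deriv_neg[OF sh, of r2] r
    by (auto simp: G_def)
  have Gm: "G r1 < G r2" using sh_dmono[OF sh r] by (simp add: G_def)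
  have t1: "P2 / G r2 \<le> P1 / G r1" by (rule frac_le) (use P G Gm in auto)
  have "f r2 * G r1 < f r1 * G r2" using sh_K[OF sh r] by (simp add: G_def)
  then have t2: "f r2 / G r2 < f r1 / G r1" using G by (simp add: divide_simps mult.commute)
  have "(P2 + f r2) / G r2 = P2 / G r2 + f r2 / G r2" by (simp add: add_divide_distrib)
  also have "\<dots> < P1 / G r1 + f r1 / G r1" using t1 t2 by simp
  also have "\<dots> = (P1 + f r1) / G r1" by (simp add: add_divide_distrib)
  finally show ?thesis by (simp add: G_def)
qed


lemma divlt: "0 < (a::real) \<Longrightarrow> 0 < b \<Longrightarrow> x * b < y * a \<Longrightarrow> x / a < y / b"
  by (simp add: divide_simps mult.commute)

definition FF :: "(real \<Rightarrow> real) \<Rightarrow> (real \<Rightarrow> real) \<Rightarrow> real \<Rightarrow> real" where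
  "FF f1 f2 t = (if t > 0 then f1 t else - f2 (- t))"

definition Fd :: "(real \<Rightarrow> real) \<Rightarrow> (real \<Rightarrow> real) \<Rightarrow> real \<Rightarrow> real" where
  "Fd f1 f2 t = (if t > 0 then deriv f1 t else deriv f2 (- t))"

definition Phi :: "(real \<Rightarrow> real) \<Rightarrow> (real \<Rightarrow> real) \<Rightarrow> real \<Rightarrow> real \<Rightarrow> real" where
  "Phi f1 f2 X b = (FF f1 f2 (b+X) - FF f1 f2 b) / Fd f1 f2 b"

context
  fixes f1 f2 :: "real \<Rightarrow> real"
  assumes sh1: "strongly_hyperbolic f1" and sh2: "strongly_hyperbolic f2"
begin

lemma Fd_neg: "t \<noteq> 0 \<Longrightarrow> Fd f1 f2 t < 0"
  unfolding Fd_def using sh_deriv_neg[OF sh1, of t] sh_deriv_neg[OF sh2, of "-t"] by auto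

lemma G1pos: "t > 0 \<Longrightarrow> - deriv f1 t > 0" using sh_deriv_neg[OF sh1, of t] by simp
lemma G2pos: "t > 0 \<Longrightarrow> - deriv f2 t > 0" using sh_deriv_neg[OF sh2, of t] by simp

lemma divlt_neg: "(a::real) < 0 \<Longrightarrow> b < 0 \<Longrightarrow> x * b < y * a \<Longrightarrow> x / a < y / b"
  by (simp add: divide_simps mult.commute)

lemma D1neg: "t > 0 \<Longrightarrow> deriv f1 t < 0" using sh_deriv_neg[OF sh1] by simp
lemma D2neg: "t > 0 \<Longrightarrow> deriv f2 t < 0" using sh_deriv_neg[OF sh2] by simp

lemma Phi_C_eq: "0 < X \<Longrightarrow> 0 < b \<Longrightarrow> Phi f1 f2 X b = (f1 (b+X) - f1 b) / deriv f1 b"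
  unfolding Phi_def FF_def Fd_def by simp

lemma Phi_C_range: "0 < X \<Longrightarrow> 0 < b \<Longrightarrow> 0 < Phi f1 f2 X b \<and> Phi f1 f2 X b < X"
  apply (subst (1 2) Phi_C_eq, assumption+)
  using sh_R1[OF sh1, of b X] sh_dec[OF sh1, of b "b+X"] D1neg[of b]
  by (auto simp: divide_less_eq zero_less_divide_iff algebra_simps)

lemma Phi_C_mono: "0 < X \<Longrightarrow> 0 < b1 \<Longrightarrow> b1 < b2 \<Longrightarrow> Phi f1 f2 X b1 < Phi f1 f2 X b2"
  using Phi_C_eq[of X b1] Phi_C_eq[of X b2]
    sh_cauchy(1)[OF sh1, of b1 "b1+X" "b2-b1" b1] D1neg[of b1] D1neg[of b2]
  by (auto intro!: divlt_neg simp: algebra_simps)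

lemma Phi_A_eq: "0 < X \<Longrightarrow> b < -X \<Longrightarrow> Phi f1 f2 X b = (f2 (-b) - f2 (-b-X)) / deriv f2 (-b)"
proof -
  have e: "-(b+X) = -b-X" by simp
  show "0 < X \<Longrightarrow> b < -X \<Longrightarrow> ?thesis" unfolding Phi_def FF_def Fd_def e by simp
qed

lemma Phi_A_range: "0 < X \<Longrightarrow> b < -X \<Longrightarrow> X < Phi f1 f2 X b"
  apply (subst Phi_A_eq, assumption+)
  using sh_R2[OF sh2, of X "-b"] D2neg[of "-b"]
  by (auto simp: less_divide_eq algebra_simps)

lemma Phi_A_mono: "0 < X \<Longrightarrow> b1 < b2 \<Longrightarrow> b2 < -X \<Longrightarrow> Phi f1 f2 X b1 < Phi f1 f2 X b2"
  using Phi_A_eq[of X b1] Phi_A_eq[of X b2]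
    sh_cauchy(2)[OF sh2, of "-b2-X" "-b2" "b2-b1" "-b2"] D2neg[of "-b1"] D2neg[of "-b2"]
  by (auto intro!: divlt_neg simp: algebra_simps)

lemma Phi_B_eq: "0 < X \<Longrightarrow> -X < b \<Longrightarrow> b < 0 \<Longrightarrow> Phi f1 f2 X b = (f1 (b+X) + f2 (-b)) / deriv f2 (-b)"
  unfolding Phi_def FF_def Fd_def by (simp add: algebra_simps)

lemma Phi_B_range: "0 < X \<Longrightarrow> -X < b \<Longrightarrow> b < 0 \<Longrightarrow> Phi f1 f2 X b < 0"
  apply (subst Phi_B_eq, assumption+)
  using sh_pos[OF sh1, of "b+X"] sh_pos[OF sh2, of "-b"] D2neg[of "-b"]
  by (auto simp: divide_less_0_iff)

lemma Phi_B_mono: "0 < X \<Longrightarrow> -X < b1 \<Longrightarrow> b1 < b2 \<Longrightarrow> b2 < 0 \<Longrightarrow> Phi f1 f2 X b1 < Phi f1 f2 X b2"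
proof -
  assume a: "0 < X" "-X < b1" "b1 < b2" "b2 < 0"
  have "(f1 (b2+X) + f2 (-b2)) / (- deriv f2 (-b2)) < (f1 (b1+X) + f2 (-b1)) / (- deriv f2 (-b1))"
    using sh_mix[OF sh2, of "-b2" "-b1" "f1 (b2+X)" "f1 (b1+X)"] a
      sh_pos[OF sh1, of "b2+X"] sh_dec_le[OF sh1, of "b1+X" "b2+X"] by simp
  then show ?thesis using Phi_B_eq[of X b1] Phi_B_eq[of X b2] a
    by (simp add: minus_divide_right[symmetric])
qed

lemma Phi_C'_eq: "X < 0 \<Longrightarrow> -X < b \<Longrightarrow> Phi f1 f2 X b = (f1 (b+X) - f1 b) / deriv f1 b"
  unfolding Phi_def FF_def Fd_def by simp

lemma Phi_C'_range: "X < 0 \<Longrightarrow> -X < b \<Longrightarrow> Phi f1 f2 X b < X"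
  apply (subst Phi_C'_eq, assumption+)
  using sh_R2[OF sh1, of "-X" b] D1neg[of b]
  by (auto simp: divide_less_eq algebra_simps)

lemma Phi_C'_mono: "X < 0 \<Longrightarrow> -X < b1 \<Longrightarrow> b1 < b2 \<Longrightarrow> Phi f1 f2 X b1 < Phi f1 f2 X b2"
  using Phi_C'_eq[of X b1] Phi_C'_eq[of X b2]
    sh_cauchy(2)[OF sh1, of "b1+X" b1 "b2-b1" b1] D1neg[of b1] D1neg[of b2]
  by (auto intro!: divlt_neg simp: algebra_simps)

lemma Phi_B'_eq: "X < 0 \<Longrightarrow> 0 < b \<Longrightarrow> b < -X \<Longrightarrow> Phi f1 f2 X b = (- f2 (-b-X) - f1 b) / deriv f1 b"
proof -
  have e: "-(b+X) = -b-X" by simp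
  show "X < 0 \<Longrightarrow> 0 < b \<Longrightarrow> b < -X \<Longrightarrow> ?thesis" unfolding Phi_def FF_def Fd_def e by simp
qed

lemma Phi_B'_range: "X < 0 \<Longrightarrow> 0 < b \<Longrightarrow> b < -X \<Longrightarrow> 0 < Phi f1 f2 X b"
  apply (subst Phi_B'_eq, assumption+)
  using sh_pos[OF sh1, of b] sh_pos[OF sh2, of "-b-X"] D1neg[of b]
  by (auto simp: zero_less_divide_iff)

lemma Phi_B'_mono: "X < 0 \<Longrightarrow> 0 < b1 \<Longrightarrow> b1 < b2 \<Longrightarrow> b2 < -X \<Longrightarrow> Phi f1 f2 X b1 < Phi f1 f2 X b2"
proof -
  assume a: "X < 0" "0 < b1" "b1 < b2" "b2 < -X"
  have "(f2 (-b1-X) + f1 b1) / (- deriv f1 b1) < (f2 (-b2-X) + f1 b2) / (- deriv f1 b2)"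
    using sh_mix[OF sh1, of b1 b2 "f2 (-b1-X)" "f2 (-b2-X)"] a
      sh_pos[OF sh2, of "-b1-X"] sh_dec_le[OF sh2, of "-b2-X" "-b1-X"] by simp
  moreover have "(- f2 (-b-X) - f1 b) / deriv f1 b = (f2 (-b-X) + f1 b) / (- deriv f1 b)" for b
    by (simp add: divide_simps)
  ultimately show ?thesis using Phi_B'_eq[of X b1] Phi_B'_eq[of X b2] a by simp
qed

lemma Phi_A'_eq: "X < 0 \<Longrightarrow> b < 0 \<Longrightarrow> Phi f1 f2 X b = (f2 (-b) - f2 (-b-X)) / deriv f2 (-b)"
proof -
  have e: "-(b+X) = -b-X" by simp
  show "X < 0 \<Longrightarrow> b < 0 \<Longrightarrow> ?thesis" unfolding Phi_def FF_def Fd_def e by simp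
qed

lemma Phi_A'_range: "X < 0 \<Longrightarrow> b < 0 \<Longrightarrow> X < Phi f1 f2 X b \<and> Phi f1 f2 X b < 0"
proof -
  have eqx: "f2 (-b + -X) = f2 (-b - X)" by simp
  show "X < 0 \<Longrightarrow> b < 0 \<Longrightarrow> ?thesis"
  apply (subst (1 2) Phi_A'_eq, assumption+)
  using sh_R1[OF sh2, of "-b" "-X", unfolded eqx] sh_dec[OF sh2, of "-b" "-b-X"] D2neg[of "-b"]
  by (auto simp: less_divide_eq divide_less_0_iff)
qed

lemma Phi_A'_mono: "X < 0 \<Longrightarrow> b1 < b2 \<Longrightarrow> b2 < 0 \<Longrightarrow> Phi f1 f2 X b1 < Phi f1 f2 X b2"
  using Phi_A'_eq[of X b1] Phi_A'_eq[of X b2]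
    sh_cauchy(1)[OF sh2, of "-b2" "-b2-X" "b2-b1" "-b2"] D2neg[of "-b1"] D2neg[of "-b2"]
  by (auto intro!: divlt_neg simp: algebra_simps)

lemma Phi_ne:
  assumes "X \<noteq> 0" "b \<noteq> 0" "b + X \<noteq> 0"
  shows "Phi f1 f2 X b \<noteq> X"
proof (cases "X > 0")
  case True
  then consider "b > 0" | "b < -X" | "-X < b \<and> b < 0" using assms by linarith
  then show ?thesis
    using Phi_C_range[OF True] Phi_A_range[OF True] Phi_B_range[OF True] True by cases force+
next
  case False
  then have X: "X < 0" using assms by simp
  then consider "b > -X" | "0 < b \<and> b < -X" | "b < 0" using assms by linarith
  then show ?thesis
    using Phi_C'_range[OF X] Phi_B'_range[OF X] Phi_A'_range[OF X] X by cases force+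
qed

lemma Phi_lt_ne:
  assumes X: "X \<noteq> 0" and b: "b1 \<noteq> 0" "b1 + X \<noteq> 0" "b2 \<noteq> 0" "b2 + X \<noteq> 0" and lt: "b1 < b2"
  shows "Phi f1 f2 X b1 \<noteq> Phi f1 f2 X b2"
proof (cases "X > 0")
  case True
  note R = Phi_C_range[OF True] Phi_A_range[OF True] Phi_B_range[OF True]
  note M = Phi_C_mono[OF True] Phi_A_mono[OF True] Phi_B_mono[OF True]
  consider "b1 < -X" "b2 < -X" | "b1 < -X" "-X < b2" "b2 < 0" | "b1 < -X" "0 < b2"
    | "-X < b1" "b1 < 0" "b2 < 0" | "-X < b1" "b1 < 0" "0 < b2" | "0 < b1"
    using b lt by linarith
  then show ?thesis
  proof cases
    case 1 then show ?thesis using M(2)[of b1 b2] lt by simp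
  next
    case 2 then show ?thesis using R(2)[of b1] R(3)[of b2] True by force
  next
    case 3 then show ?thesis using R(2)[of b1] R(1)[of b2] by force
  next
    case 4 then show ?thesis using M(3)[of b1 b2] lt by simp
  next
    case 5 then show ?thesis using R(3)[of b1] R(1)[of b2] by force
  next
    case 6 then show ?thesis using M(1)[of b1 b2] lt by simp
  qed
next
  case False
  then have X': "X < 0" using X by simp
  note R = Phi_C'_range[OF X'] Phi_B'_range[OF X'] Phi_A'_range[OF X']
  note M = Phi_C'_mono[OF X'] Phi_B'_mono[OF X'] Phi_A'_mono[OF X']
  consider "b2 < 0" | "b1 < 0" "0 < b2" "b2 < -X" | "b1 < 0" "-X < b2"
    | "0 < b1" "b2 < -X" | "0 < b1" "b1 < -X" "-X < b2" | "-X < b1"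
    using b lt by linarith
  then show ?thesis
  proof cases
    case 1 then show ?thesis using M(3)[of b1 b2] lt by simp
  next
    case 2 then show ?thesis using R(3)[of b1] R(2)[of b2] by force
  next
    case 3 then show ?thesis using R(3)[of b1] R(1)[of b2] by force
  next
    case 4 then show ?thesis using M(2)[of b1 b2] lt by simp
  next
    case 5 then show ?thesis using R(2)[of b1] R(1)[of b2] X' by force
  next
    case 6 then show ?thesis using M(1)[of b1 b2] lt by simp
  qed
qed

lemma Phi_inj:
  assumes "X \<noteq> 0" "b1 \<noteq> 0" "b1 + X \<noteq> 0" "b2 \<noteq> 0" "b2 + X \<noteq> 0"
    and "Phi f1 f2 X b1 = Phi f1 f2 X b2"
  shows "b1 = b2"
  using Phi_lt_ne[of X b1 b2] Phi_lt_ne[of X b2 b1] assms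
  by (cases b1 b2 rule: linorder_cases) auto

lemma Q_inj:
  assumes "b1 \<noteq> 0" "b2 \<noteq> 0" "FF f1 f2 b1 / Fd f1 f2 b1 = FF f1 f2 b2 / Fd f1 f2 b2"
  shows "b1 = b2"
proof -
  have Qp: "FF f1 f2 b / Fd f1 f2 b = f1 b / deriv f1 b" if "b > 0" for b
    using that by (simp add: FF_def Fd_def)
  have Qn: "FF f1 f2 b / Fd f1 f2 b = - (f2 (-b) / deriv f2 (-b))" if "b < 0" for b
    using that by (simp add: FF_def Fd_def)
  have sp: "f1 b / deriv f1 b < 0" if "b > 0" for b
    using that sh_pos[OF sh1, of b] D1neg[of b] by (simp add: divide_less_0_iff)
  have sn: "f2 r / deriv f2 r < 0" if "r > 0" for r
    using that sh_pos[OF sh2, of r] D2neg[of r] by (simp add: divide_less_0_iff)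
  have lt: "FF f1 f2 b1 / Fd f1 f2 b1 \<noteq> FF f1 f2 b2 / Fd f1 f2 b2" if hh: "b1 < b2" "b1 \<noteq> 0" "b2 \<noteq> 0" for b1 b2
  proof -
    consider "0 < b1" | "b1 < 0" "0 < b2" | "b2 < 0" using hh by linarith
    then show ?thesis
    proof cases
      case 1
      have "f1 b2 / deriv f1 b2 < f1 b1 / deriv f1 b1"
        using sh_K[OF sh1 1 hh(1)] D1neg[of b1] D1neg[of b2] 1 hh
        by (intro divlt_neg) (auto simp: algebra_simps)
      then show ?thesis using Qp[of b1] Qp[of b2] 1 hh by simp
    next
      case 2
      then show ?thesis using Qp[of b2] Qn[of b1] sp[of b2] sn[of "-b1"] by simp
    next
      case 3
      have "f2 (-b1) / deriv f2 (-b1) < f2 (-b2) / deriv f2 (-b2)"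
        using sh_K[OF sh2, of "-b2" "-b1"] D2neg[of "-b1"] D2neg[of "-b2"] 3 hh
        by (intro divlt_neg) (auto simp: algebra_simps)
      then show ?thesis using Qn[of b1] Qn[of b2] 3 hh by simp
    qed
  qed
  show ?thesis using lt[of b1 b2] lt[of b2 b1] assms by (cases b1 b2 rule: linorder_cases) auto
qed

end


lemma fabc_FF: "fabc f1 f2 a b c x = a * FF f1 f2 (x+b) + c"
proof -
  have e: "-(x+b) = -x-b" by simp
  show ?thesis unfolding fabc_def FF_def e by auto
qed

lemma mem_fabc_FF[simp]: "(Fin x, Fin y) \<in> curve_fabc f1 f2 a b c \<longleftrightarrow> x \<noteq> -b \<and> y = fabc f1 f2 a b c x"
  unfolding curve_fabc_def by auto
lemma mem_fabc_FI[simp]: "(Fin x, Infty) \<in> curve_fabc f1 f2 a b c \<longleftrightarrow> x = -b"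
  unfolding curve_fabc_def by auto
lemma mem_fabc_IF[simp]: "(Infty, Fin y) \<in> curve_fabc f1 f2 a b c \<longleftrightarrow> y = c"
  unfolding curve_fabc_def by auto
lemma mem_fabc_II[simp]: "(Infty, Infty) \<notin> curve_fabc f1 f2 a b c"
  unfolding curve_fabc_def by auto
lemma mem_line_FF[simp]: "(Fin x, Fin y) \<in> curve_line s t \<longleftrightarrow> y = s * x + t"
  unfolding curve_line_def by auto
lemma mem_line_FI[simp]: "(Fin x, Infty) \<notin> curve_line s t"
  unfolding curve_line_def by auto
lemma mem_line_IF[simp]: "(Infty, Fin y) \<notin> curve_line s t"
  unfolding curve_line_def by auto
lemma mem_line_II[simp]: "(Infty, Infty) \<in> curve_line s t"
  unfolding curve_line_def by auto

lemma two_zeros_pos: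
  fixes h :: "real \<Rightarrow> real"
  assumes "a0 < u" "u < b0" and cont: "\<forall>x. a0 \<le> x \<and> x \<le> b0 \<longrightarrow> isCont h x"
    and hu: "h u = 0" and der: "DERIV h u :> d" and d: "d \<noteq> 0"
    and ha: "h a0 > 0" and hb: "h b0 > 0"
  shows "\<exists>z. a0 < z \<and> z < b0 \<and> z \<noteq> u \<and> h z = 0"
proof (cases "d > 0")
  case True
  from DERIV_pos_inc_left[OF der True] obtain \<delta> where \<delta>: "\<delta> > 0"
    "\<And>k. k > 0 \<Longrightarrow> k < \<delta> \<Longrightarrow> h (u - k) < h u" by blast
  obtain k where k: "k > 0" "k < \<delta>" "k < u - a0" using field_lbound_gt_zero[of \<delta> "u - a0"] \<delta> assms by auto
  have hk: "h (u - k) < 0" using \<delta>(2)[OF k(1,2)] hu by simp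
  have "\<exists>z. a0 \<le> z \<and> z \<le> u - k \<and> h z = 0"
    by (rule IVT2) (use hk ha k cont assms in auto)
  then obtain z where z: "a0 \<le> z" "z \<le> u - k" "h z = 0" by blast
  have "z \<noteq> a0" using z ha by auto
  then show ?thesis using z k assms by (intro exI[of _ z]) auto
next
  case False
  then have dn: "d < 0" using d by simp
  from DERIV_neg_dec_right[OF der dn] obtain \<delta> where \<delta>: "\<delta> > 0"
    "\<And>k. k > 0 \<Longrightarrow> k < \<delta> \<Longrightarrow> h u > h (u + k)" by blast
  obtain k where k: "k > 0" "k < \<delta>" "k < b0 - u" using field_lbound_gt_zero[of \<delta> "b0 - u"] \<delta> assms by auto
  have hk: "h (u + k) < 0" using \<delta>(2)[OF k(1,2)] hu by simp
  have "\<exists>z. u + k \<le> z \<and> z \<le> b0 \<and> h z = 0"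
    by (rule IVT) (use hk hb k cont assms in auto)
  then obtain z where z: "u + k \<le> z" "z \<le> b0" "h z = 0" by blast
  have "z \<noteq> b0" using z hb by auto
  then show ?thesis using z k assms by (intro exI[of _ z]) auto
qed

lemma two_zeros_neg:
  fixes h :: "real \<Rightarrow> real"
  assumes "a0 < u" "u < b0" and cont: "\<forall>x. a0 \<le> x \<and> x \<le> b0 \<longrightarrow> isCont h x"
    and hu: "h u = 0" and der: "DERIV h u :> d" and d: "d \<noteq> 0"
    and ha: "h a0 < 0" and hb: "h b0 < 0"
  shows "\<exists>z. a0 < z \<and> z < b0 \<and> z \<noteq> u \<and> h z = 0"
proof -
  have "\<exists>z. a0 < z \<and> z < b0 \<and> z \<noteq> u \<and> - h z = 0"
    by (rule two_zeros_pos[of a0 u b0 "\<lambda>x. - h x" "-d"])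
      (use assms in \<open>auto intro!: continuous_intros derivative_eq_intros\<close>)
  then show ?thesis by simp
qed

context
  fixes f1 f2 :: "real \<Rightarrow> real"
  assumes sh1: "strongly_hyperbolic f1" and sh2: "strongly_hyperbolic f2"
begin

lemma fabc_deriv:
  assumes "u \<noteq> -b"
  shows "(fabc f1 f2 a b c has_real_derivative a * Fd f1 f2 (u+b)) (at u)"
proof (cases "u > -b")
  case True
  have d1: "((\<lambda>x. f1 (x + b)) has_real_derivative deriv f1 (u+b)) (at u)"
    using DERIV_shift[of f1 "deriv f1 (u+b)" u b] sh_der[OF sh1, of "u+b"] True by simp
  have "((\<lambda>x. a * f1 (x + b) + c) has_real_derivative a * deriv f1 (u+b)) (at u)"
    using d1 by (auto intro!: derivative_eq_intros)
  then have "((\<lambda>x. a * f1 (x + b) + c) has_real_derivative a * Fd f1 f2 (u+b)) (at u)"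
    using True by (simp add: Fd_def)
  then show ?thesis
    by (rule has_field_derivative_transform_within_open[where S="{-b<..}"])
      (use True in \<open>auto simp: fabc_def Fd_def\<close>)
next
  case False
  then have F: "u < -b" using assms by simp
  have d1: "((\<lambda>x. f2 (-x - b)) has_real_derivative deriv f2 (-u-b) * (-1)) (at u)"
    by (rule DERIV_chain2[of f2]) (use sh_der[OF sh2, of "-u-b"] F in \<open>auto intro!: derivative_eq_intros\<close>)
  have "((\<lambda>x. - a * f2 (-x - b) + c) has_real_derivative - a * (deriv f2 (-u-b) * (-1))) (at u)"
    using d1 by (auto intro!: derivative_eq_intros)
  then have "((\<lambda>x. - a * f2 (-x - b) + c) has_real_derivative a * Fd f1 f2 (u+b)) (at u)"
    using F by (simp add: Fd_def)
  then show ?thesis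
    by (rule has_field_derivative_transform_within_open[where S="{..< -b}"])
      (use F in \<open>auto simp: fabc_def\<close>)
qed

lemma fabc_cont: "u \<noteq> -b \<Longrightarrow> isCont (fabc f1 f2 a b c) u"
  using fabc_deriv DERIV_isCont by blast

lemma touch_LE:
  assumes a: "a > 0" and s: "s < 0"
    and pL: "(Fin u, Fin v) \<in> curve_line s t" and pE: "(Fin u, Fin v) \<in> curve_fabc f1 f2 a b c"
    and only: "\<And>z. z \<in> curve_line s t \<Longrightarrow> z \<in> curve_fabc f1 f2 a b c \<Longrightarrow> z = (Fin u, Fin v)"
  shows "s = a * Fd f1 f2 (u+b)"
proof (rule ccontr)
  assume ne: "s \<noteq> a * Fd f1 f2 (u+b)"
  define h where "h x = s*x + t - fabc f1 f2 a b c x" for x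
  have ub: "u \<noteq> -b" using pE by simp
  have hu: "h u = 0" using pL pE by (simp add: h_def)
  have der: "DERIV h u :> s - a * Fd f1 f2 (u+b)"
    unfolding h_def using fabc_deriv[OF ub, of a c] by (auto intro!: derivative_eq_intros)
  have dne: "s - a * Fd f1 f2 (u+b) \<noteq> 0" using ne by simp
  have cont: "isCont h x" if "x \<noteq> -b" for x
    unfolding h_def using fabc_cont[OF that, of a c] by (auto intro!: continuous_intros)
  have zero_imp: "z = u" if "z \<noteq> -b" "h z = 0" for z
  proof -
    have "(Fin z, Fin (s*z+t)) \<in> curve_line s t" by simp
    moreover have "(Fin z, Fin (s*z+t)) \<in> curve_fabc f1 f2 a b c" using that by (simp add: h_def)
    ultimately show ?thesis using only by fastforce
  qed
  define M where "M = (\<bar>s\<bar>*(\<bar>b\<bar>+\<bar>u\<bar>) + \<bar>t\<bar> + \<bar>c\<bar>)/a"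
  have aM: "a * M = \<bar>s\<bar>*(\<bar>b\<bar>+\<bar>u\<bar>) + \<bar>t\<bar> + \<bar>c\<bar>" using a by (simp add: M_def)
  have bnd: "s * x + t - c \<le> a * M" if "\<bar>x\<bar> \<le> \<bar>b\<bar> + \<bar>u\<bar>" for x
  proof -
    have "\<bar>s * x\<bar> \<le> \<bar>s\<bar> * (\<bar>b\<bar>+\<bar>u\<bar>)" unfolding abs_mult by (rule mult_left_mono) (use that in auto)
    then show ?thesis unfolding aM by linarith
  qed
  have bnd': "- (s * x + t - c) \<le> a * M" if "\<bar>x\<bar> \<le> \<bar>b\<bar> + \<bar>u\<bar>" for x
  proof -
    have "\<bar>s * x\<bar> \<le> \<bar>s\<bar> * (\<bar>b\<bar>+\<bar>u\<bar>)" unfolding abs_mult by (rule mult_left_mono) (use that in auto)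
    then show ?thesis unfolding aM by linarith
  qed
  obtain z where z: "z \<noteq> u" "z \<noteq> -b" "h z = 0"
  proof (cases "u > -b")
    case True
    define b0 where "b0 = max (u+1) ((c-t)/s)"
    have "s * b0 \<le> s * ((c-t)/s)" by (rule mult_left_mono_neg) (use s in \<open>auto simp: b0_def\<close>)
    then have sb0: "s * b0 \<le> c - t" using s by simp
    have b0: "u < b0" "b0 > -b" using True by (auto simp: b0_def)
    have "f1 (b0 + b) > 0" using sh_pos[OF sh1, of "b0+b"] b0 by simp
    then have hb0: "h b0 < 0" using b0 sb0 a by (simp add: h_def fabc_def) (smt (verit) mult_pos_pos)
    obtain y where y: "0 < y" "y < u + b" "M < f1 y" using sh_small[OF sh1, of "u+b" M] True by auto
    define a0 where "a0 = y - b"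
    have a0: "-b < a0" "a0 < u" using y by (auto simp: a0_def)
    have "a * M < a * f1 y" using y a by simp
    moreover have "s * a0 + t - c \<le> a * M" using a0 by (intro bnd) auto
    ultimately have ha0: "h a0 < 0" using a0 by (simp add: h_def fabc_def a0_def)
    have "\<exists>z. a0 < z \<and> z < b0 \<and> z \<noteq> u \<and> h z = 0"
      by (rule two_zeros_neg[OF a0(2) b0(1) _ hu der dne ha0 hb0]) (use cont a0 in auto)
    then show ?thesis using that a0 by force
  next
    case False
    then have F: "u < -b" using ub by simp
    define a0 where "a0 = min (u-1) ((c-t)/s)"
    have "s * ((c-t)/s) \<le> s * a0" by (rule mult_left_mono_neg) (use s in \<open>auto simp: a0_def\<close>)
    then have sa0: "c - t \<le> s * a0" using s by simp
    have a0: "a0 < u" "a0 < -b" using F by (auto simp: a0_def)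
    have "f2 (-a0-b) > 0" using sh_pos[OF sh2, of "-a0-b"] a0 by simp
    then have ha0: "h a0 > 0" using a0 sa0 a by (simp add: h_def fabc_def) (smt (verit) mult_pos_pos)
    obtain y where y: "0 < y" "y < -b - u" "M < f2 y" using sh_small[OF sh2, of "-b-u" M] F by auto
    define b0 where "b0 = -b - y"
    have b0: "u < b0" "b0 < -b" using y by (auto simp: b0_def)
    have "a * M < a * f2 y" using y a by simp
    moreover have "- (s * b0 + t - c) \<le> a * M" using b0 by (intro bnd') auto
    ultimately have hb0: "h b0 > 0" using b0 by (simp add: h_def fabc_def b0_def)
    have "\<exists>z. a0 < z \<and> z < b0 \<and> z \<noteq> u \<and> h z = 0"
      by (rule two_zeros_pos[OF a0(1) b0(1) _ hu der dne ha0 hb0]) (use cont b0 in auto)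
    then show ?thesis using that b0 by force
  qed
  then show False using zero_imp by blast
qed

lemma touch_EE_aux:
  assumes a: "a > 0" and a': "a' > 0" and bb: "b' < b"
    and pC: "(Fin u, Fin v) \<in> curve_fabc f1 f2 a b c" and pD: "(Fin u, Fin v) \<in> curve_fabc f1 f2 a' b' c'"
    and only: "\<And>z. z \<in> curve_fabc f1 f2 a b c \<Longrightarrow> z \<in> curve_fabc f1 f2 a' b' c' \<Longrightarrow> z = (Fin u, Fin v)"
  shows "a * Fd f1 f2 (u+b) = a' * Fd f1 f2 (u+b')"
proof -
  have cc: "c \<noteq> c'"
  proof
    assume "c = c'"
    then have "(Infty, Fin c) = (Fin u, Fin v)" using only[of "(Infty, Fin c)"] by simp
    then show False by simp
  qed
  define h where "h x = fabc f1 f2 a b c x - fabc f1 f2 a' b' c' x" for x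
  define e where "e = b - b'"
  have e: "e > 0" using bb by (simp add: e_def)
  have ub: "u \<noteq> -b" "u \<noteq> -b'" using pC pD by auto
  have hu: "h u = 0" using pC pD by (simp add: h_def)
  have zero_imp: "z = u" if "z \<noteq> -b" "z \<noteq> -b'" "h z = 0" for z
  proof -
    have "(Fin z, Fin (fabc f1 f2 a b c z)) \<in> curve_fabc f1 f2 a b c" using that by simp
    moreover have "(Fin z, Fin (fabc f1 f2 a b c z)) \<in> curve_fabc f1 f2 a' b' c'" using that by (simp add: h_def)
    ultimately show ?thesis using only by fastforce
  qed
  have cont: "isCont h x" if "x \<noteq> -b" "x \<noteq> -b'" for x
    unfolding h_def using fabc_cont[OF that(1), of a c] fabc_cont[OF that(2), of a' c'] by (auto intro!: continuous_intros)
  have hL: "h x = - a * f2 (-x-b) + a' * f2 (-x-b') + c - c'" if "x < -b" for x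
    using that bb by (simp add: h_def fabc_def)
  have hM: "h x = a * f1 (x+b) + a' * f2 (-x-b') + c - c'" if "-b < x" "x < -b'" for x
    using that by (simp add: h_def fabc_def)
  have hR: "h x = a * f1 (x+b) - a' * f1 (x+b') + c - c'" if "-b' < x" for x
    using that bb by (simp add: h_def fabc_def)
  have P1neg: "\<exists>x. x < L \<and> x < -b \<and> h x < 0" if hyp: "c < c'" for L
  proof -
    obtain y where y: "max (-b' - L) e < y" "f2 y < (c'-c)/a'"
      using sh_large[OF sh2, of "(c'-c)/a'" "max (-b' - L) e"] hyp a' by auto
    define x where "x = -b' - y"
    have x: "x < L" "x < -b" using y by (auto simp: x_def e_def)
    have "a' * f2 y < c' - c" using y a' by (simp add: less_divide_eq mult.commute)
    moreover have "f2 (-x-b) > 0" using sh_pos[OF sh2, of "-x-b"] x by simp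
    ultimately have "h x < 0" using hL[OF x(2)] a by (simp add: x_def) (smt (verit) mult_pos_pos)
    then show ?thesis using x by blast
  qed
  have P1pos: "\<exists>x. x < L \<and> x < -b \<and> h x > 0" if hyp: "c' < c" for L
  proof -
    obtain y where y: "max (-b - L) 0 < y" "f2 y < (c-c')/a"
      using sh_large[OF sh2, of "(c-c')/a" "max (-b - L) 0"] hyp a by auto
    define x where "x = -b - y"
    have x: "x < L" "x < -b" using y by (auto simp: x_def)
    have "a * f2 y < c - c'" using y a by (simp add: less_divide_eq mult.commute)
    moreover have "f2 (-x-b') > 0" using sh_pos[OF sh2, of "-x-b'"] x bb by simp
    ultimately have "h x > 0" using hL[OF x(2)] a' by (simp add: x_def) (smt (verit) mult_pos_pos)
    then show ?thesis using x by blast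
  qed
  have P2neg: "\<exists>x. L < x \<and> x < -b \<and> h x < 0" if hyp: "L < -b" for L
  proof -
    obtain y where y: "0 < y" "y < -b - L" "(a' * f2 e + \<bar>c - c'\<bar>)/a < f2 y"
      using sh_small[OF sh2, of "-b - L" "(a' * f2 e + \<bar>c - c'\<bar>)/a"] hyp by auto
    define x where "x = -b - y"
    have x: "L < x" "x < -b" using y by (auto simp: x_def)
    have "a' * f2 e + \<bar>c - c'\<bar> < a * f2 y" using y a by (simp add: divide_less_eq mult.commute)
    moreover have "f2 (y + e) < f2 e" using sh_dec[OF sh2, of e "y+e"] y e by simp
    then have "a' * f2 (y+e) < a' * f2 e" using a' by simp
    moreover have ar1: "-x-b' = y + e" by (simp add: x_def e_def)
    moreover have ar2: "-x-b = y" by (simp add: x_def)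
    moreover have "c - c' \<le> \<bar>c - c'\<bar>" by simp
    ultimately have "h x < 0" using hL[OF x(2), unfolded ar1 ar2] by linarith
    then show ?thesis using x by blast
  qed
  have P3pos: "\<exists>x. -b < x \<and> x < R \<and> x < -b' \<and> h x > 0" if hyp: "-b < R" for R
  proof -
    obtain d where d: "0 < d" "d < R + b" "d < e" using field_lbound_gt_zero[of "R+b" e] hyp e by auto
    obtain y where y: "0 < y" "y < d" "\<bar>c - c'\<bar>/a < f1 y"
      using sh_small[OF sh1, of d "\<bar>c - c'\<bar>/a"] d by auto
    define x where "x = y - b"
    have x: "-b < x" "x < R" "x < -b'" using y d by (auto simp: x_def e_def)
    have "\<bar>c - c'\<bar> < a * f1 y" using y a by (simp add: divide_less_eq mult.commute)
    moreover have "f2 (-x-b') > 0" using sh_pos[OF sh2, of "-x-b'"] x by simp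
    ultimately have "h x > 0" using hM[OF x(1) x(3)] a' by (simp add: x_def) (smt (verit) mult_pos_pos)
    then show ?thesis using x by blast
  qed
  have P4pos: "\<exists>x. L < x \<and> x < -b' \<and> -b < x \<and> h x > 0" if hyp: "-b \<le> L" "L < -b'" for L
  proof -
    obtain y where y: "0 < y" "y < -b' - L" "\<bar>c - c'\<bar>/a' < f2 y"
      using sh_small[OF sh2, of "-b' - L" "\<bar>c - c'\<bar>/a'"] hyp by auto
    define x where "x = -b' - y"
    have x: "L < x" "x < -b'" "-b < x" using y that by (auto simp: x_def)
    have "\<bar>c - c'\<bar> < a' * f2 y" using y a' by (simp add: divide_less_eq mult.commute)
    moreover have "f1 (x+b) > 0" using sh_pos[OF sh1, of "x+b"] x by simp
    ultimately have "h x > 0" using hM[OF x(3) x(2)] a by (simp add: x_def) (smt (verit) mult_pos_pos)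
    then show ?thesis using x by blast
  qed
  have P5neg: "\<exists>x. -b' < x \<and> x < R \<and> h x < 0" if hyp: "-b' < R" for R
  proof -
    obtain y where y: "0 < y" "y < R + b'" "(a * f1 e + \<bar>c - c'\<bar>)/a' < f1 y"
      using sh_small[OF sh1, of "R + b'" "(a * f1 e + \<bar>c - c'\<bar>)/a'"] hyp by auto
    define x where "x = y - b'"
    have x: "-b' < x" "x < R" using y by (auto simp: x_def)
    have "a * f1 e + \<bar>c - c'\<bar> < a' * f1 y" using y a' by (simp add: divide_less_eq mult.commute)
    moreover have "f1 (y + e) < f1 e" using sh_dec[OF sh1, of e "y+e"] y e by simp
    then have "a * f1 (y+e) < a * f1 e" using a by simp
    moreover have ar1: "x + b = y + e" by (simp add: x_def e_def)
    moreover have ar2: "x + b' = y" by (simp add: x_def)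
    moreover have "c - c' \<le> \<bar>c - c'\<bar>" by simp
    ultimately have "h x < 0" using hR[OF x(1), unfolded ar1 ar2] by linarith
    then show ?thesis using x by blast
  qed
  have P6neg: "\<exists>x. R < x \<and> -b' < x \<and> h x < 0" if hyp: "c < c'" for R
  proof -
    obtain y where y: "max (R + b) e < y" "f1 y < (c'-c)/a"
      using sh_large[OF sh1, of "(c'-c)/a" "max (R + b) e"] hyp a by auto
    define x where "x = y - b"
    have x: "R < x" "-b' < x" using y by (auto simp: x_def e_def)
    have "a * f1 y < c' - c" using y a by (simp add: less_divide_eq mult.commute)
    moreover have "f1 (x+b') > 0" using sh_pos[OF sh1, of "x+b'"] x by simp
    ultimately have "h x < 0" using hR[OF x(2)] a' by (simp add: x_def) (smt (verit) mult_pos_pos)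
    then show ?thesis using x by blast
  qed
  have P6pos: "\<exists>x. R < x \<and> -b' < x \<and> h x > 0" if hyp: "c' < c" for R
  proof -
    obtain y where y: "max (R + b') 0 < y" "f1 y < (c-c')/a'"
      using sh_large[OF sh1, of "(c-c')/a'" "max (R + b') 0"] hyp a' by auto
    define x where "x = y - b'"
    have x: "R < x" "-b' < x" using y by (auto simp: x_def)
    have "a' * f1 y < c - c'" using y a' by (simp add: less_divide_eq mult.commute)
    moreover have "f1 (x+b) > 0" using sh_pos[OF sh1, of "x+b"] x bb by simp
    ultimately have "h x > 0" using hR[OF x(2)] a by (simp add: x_def) (smt (verit) mult_pos_pos)
    then show ?thesis using x by blast
  qed
  show ?thesis
  proof (cases "c' < c")
    case True
    obtain x1 where x1: "x1 < -b" "h x1 > 0" using P1pos[OF True, of "-b"] by blast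
    obtain x2 where x2: "x1 < x2" "x2 < -b" "h x2 < 0" using P2neg[of x1] x1 by blast
    have "\<exists>z. x1 \<le> z \<and> z \<le> x2 \<and> h z = 0"
      by (rule IVT2) (use x1 x2 cont bb in auto)
    then obtain z1 where z1: "z1 \<le> x2" "h z1 = 0" by blast
    have "z1 = u" using zero_imp[of z1] z1 x2 bb by simp
    obtain x5 where x5: "-b' < x5" "h x5 < 0" using P5neg[of "-b'+1"] by auto
    obtain x6 where x6: "x5 < x6" "h x6 > 0" using P6pos[OF True, of x5] by blast
    have "\<exists>z. x5 \<le> z \<and> z \<le> x6 \<and> h z = 0"
      by (rule IVT) (use x5 x6 cont bb in auto)
    then obtain z3 where z3: "x5 \<le> z3" "h z3 = 0" by blast
    have "z3 = u" using zero_imp[of z3] z3 x5 bb by simp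
    then show ?thesis using \<open>z1 = u\<close> z1 z3 x2 x5 bb by simp
  next
    case False
    then have lt: "c < c'" using cc by simp
    show ?thesis
    proof (rule ccontr)
      assume ne: "\<not> ?thesis"
      have der: "DERIV h u :> a * Fd f1 f2 (u+b) - a' * Fd f1 f2 (u+b')"
        unfolding h_def using fabc_deriv[OF ub(1), of a c] fabc_deriv[OF ub(2), of a' c']
        by (auto intro!: derivative_eq_intros)
      have dne: "a * Fd f1 f2 (u+b) - a' * Fd f1 f2 (u+b') \<noteq> 0" using ne by simp
      obtain z where z: "z \<noteq> u" "z \<noteq> -b" "z \<noteq> -b'" "h z = 0"
      proof -
        consider "u < -b" | "-b < u" "u < -b'" | "-b' < u" using ub by linarith
        then show ?thesis
        proof cases
          case 1
          obtain a0 where a0: "a0 < u" "a0 < -b" "h a0 < 0" using P1neg[OF lt, of u] by blast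
          obtain b0 where b0: "u < b0" "b0 < -b" "h b0 < 0" using P2neg[OF 1] by blast
          have "\<exists>z. a0 < z \<and> z < b0 \<and> z \<noteq> u \<and> h z = 0"
            by (rule two_zeros_neg[OF a0(1) b0(1) _ hu der dne a0(3) b0(3)]) (use cont b0 bb in auto)
          then show ?thesis using that b0 bb by force
        next
          case 2
          obtain a0 where a0: "-b < a0" "a0 < u" "h a0 > 0" using P3pos[OF 2(1)] by blast
          obtain b0 where b0: "u < b0" "b0 < -b'" "h b0 > 0" using P4pos[of u] 2 by auto
          have "\<exists>z. a0 < z \<and> z < b0 \<and> z \<noteq> u \<and> h z = 0"
            by (rule two_zeros_pos[OF a0(2) b0(1) _ hu der dne a0(3) b0(3)]) (use cont a0 b0 in auto)
          then show ?thesis using that a0 b0 by force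
        next
          case 3
          obtain a0 where a0: "-b' < a0" "a0 < u" "h a0 < 0" using P5neg[OF 3] by blast
          obtain b0 where b0: "u < b0" "h b0 < 0" using P6neg[OF lt, of u] by blast
          have "\<exists>z. a0 < z \<and> z < b0 \<and> z \<noteq> u \<and> h z = 0"
            by (rule two_zeros_neg[OF a0(2) b0(1) _ hu der dne a0(3) b0(2)]) (use cont a0 bb in auto)
          then show ?thesis using that a0 bb by force
        qed
      qed
      then show False using zero_imp by blast
    qed
  qed
qed

lemma touch_EE:
  assumes a: "a > 0" and a': "a' > 0"
    and pC: "(Fin u, Fin v) \<in> curve_fabc f1 f2 a b c" and pD: "(Fin u, Fin v) \<in> curve_fabc f1 f2 a' b' c'"
    and only: "\<And>z. z \<in> curve_fabc f1 f2 a b c \<Longrightarrow> z \<in> curve_fabc f1 f2 a' b' c' \<Longrightarrow> z = (Fin u, Fin v)"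
  shows "a * Fd f1 f2 (u+b) = a' * Fd f1 f2 (u+b')"
proof -
  have "b \<noteq> b'"
  proof
    assume "b = b'"
    then have "(Fin (-b), Infty) = (Fin u, Fin v)" using only[of "(Fin (-b), Infty)"] by simp
    then show False by simp
  qed
  then consider "b' < b" | "b < b'" by linarith
  then show ?thesis
  proof cases
    case 1 then show ?thesis using touch_EE_aux[OF a a' 1 pC pD only] by blast
  next
    case 2 then show ?thesis using touch_EE_aux[OF a' a 2 pD pC] only by metis
  qed
qed

end


lemma Cminus_cases:
  assumes "X \<in> Cminus f1 f2"
  obtains a b c where "a > 0" "X = curve_fabc f1 f2 a b c"
    | s t where "s < 0" "X = curve_line s t"
  using assms unfolding Cminus_def by blast

context
  fixes f1 f2 :: "real \<Rightarrow> real"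
  assumes sh1: "strongly_hyperbolic f1" and sh2: "strongly_hyperbolic f2"
begin

lemma touch_FI:
  assumes a: "a > 0" "a' > 0"
    and only: "\<And>z. z \<in> curve_fabc f1 f2 a b c \<Longrightarrow> z \<in> curve_fabc f1 f2 a' b c' \<Longrightarrow> z = (Fin (-b), Infty)"
  shows "a = a'"
proof (rule ccontr)
  assume ne: "a \<noteq> a'"
  have cc: "c \<noteq> c'"
  proof
    assume "c = c'"
    then show False using only[of "(Infty, Fin c)"] by simp
  qed
  define w where "w = (c' - c) / (a - a')"
  have aw: "(a - a') * w = c' - c" using ne by (simp add: w_def)
  have w0: "w \<noteq> 0" using cc ne by (simp add: w_def)
  obtain x where x: "x \<noteq> -b" "fabc f1 f2 a b c x = fabc f1 f2 a' b c' x"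
  proof (cases "w > 0")
    case True
    obtain t where t: "t > 0" "f1 t = w" using sh_surj[OF sh1 True] by blast
    have "fabc f1 f2 a b c (t - b) = fabc f1 f2 a' b c' (t - b)"
      using t aw by (simp add: fabc_def algebra_simps)
    then show ?thesis using that[of "t - b"] t by simp
  next
    case False
    then have wn: "-w > 0" using w0 by simp
    obtain t where t: "t > 0" "f2 t = -w" using sh_surj[OF sh2 wn] by blast
    have "fabc f1 f2 a b c (-t - b) = fabc f1 f2 a' b c' (-t - b)"
      using t aw by (simp add: fabc_def algebra_simps)
    then show ?thesis using that[of "-t - b"] t by simp
  qed
  then show False using only[of "(Fin x, Fin (fabc f1 f2 a b c x))"] by simp
qed

lemma touch_IF_aux:
  assumes a: "0 < a" "a < a'" and bb: "b \<noteq> b'"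
  shows "\<exists>x. x \<noteq> -b \<and> x \<noteq> -b' \<and> fabc f1 f2 a b v x = fabc f1 f2 a' b' v x"
proof (cases "b < b'")
  case True
  obtain y where y: "y > 0" "a * f1 y = a' * f1 (y + (b' - b))"
    using sh_ratio[OF sh1 a, of "b' - b"] True by auto
  have e1: "y - b + b = y" by simp
  have e2: "y - b + b' = y + (b' - b)" by simp
  have "fabc f1 f2 a b v (y - b) = fabc f1 f2 a' b' v (y - b)"
    using y True unfolding fabc_def e1 e2 by simp
  then show ?thesis using y True by (intro exI[of _ "y - b"]) auto
next
  case False
  then have lt: "b' < b" using bb by simp
  obtain y where y: "y > 0" "a * f2 y = a' * f2 (y + (b - b'))"
    using sh_ratio[OF sh2 a, of "b - b'"] lt by auto
  have e1: "- (-b - y) - b = y" by simp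
  have e2: "- (-b - y) - b' = y + (b - b')" by simp
  have "fabc f1 f2 a b v (-b - y) = fabc f1 f2 a' b' v (-b - y)"
    using y lt unfolding fabc_def e1 e2 by simp
  then show ?thesis using y lt by (intro exI[of _ "-b - y"]) auto
qed

lemma touch_IF:
  assumes a: "a > 0" "a' > 0"
    and only: "\<And>z. z \<in> curve_fabc f1 f2 a b v \<Longrightarrow> z \<in> curve_fabc f1 f2 a' b' v \<Longrightarrow> z = (Infty, Fin v)"
  shows "a = a'"
proof (rule ccontr)
  assume ne: "a \<noteq> a'"
  have bb: "b \<noteq> b'"
  proof
    assume "b = b'"
    then show False using only[of "(Fin (-b), Infty)"] by simp
  qed
  obtain x where x: "x \<noteq> -b" "x \<noteq> -b'" "fabc f1 f2 a b v x = fabc f1 f2 a' b' v x"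
  proof (cases "a < a'")
    case True
    then show ?thesis using touch_IF_aux[of a a' b b' v] a bb that by blast
  next
    case False
    then have "a' < a" using ne by simp
    then show ?thesis using touch_IF_aux[of a' a b' b v] a bb that by force
  qed
  then show False using only[of "(Fin x, Fin (fabc f1 f2 a b v x))"] by simp
qed

lemma FF_inj:
  assumes "s \<noteq> 0" "t \<noteq> 0" "FF f1 f2 s = FF f1 f2 t"
  shows "s = t"
proof (rule ccontr)
  assume ne: "s \<noteq> t"
  have lt: "FF f1 f2 x \<noteq> FF f1 f2 y" if hh: "x < y" "x \<noteq> 0" "y \<noteq> 0" for x y
  proof -
    consider "0 < x" | "x < 0" "0 < y" | "y < 0" using hh by linarith
    then show ?thesis
    proof cases
      case 1 then show ?thesis using sh_dec[OF sh1 1 that(1)] that by (simp add: FF_def)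
    next
      case 2 then show ?thesis using sh_pos[OF sh1, of y] sh_pos[OF sh2, of "-x"] by (simp add: FF_def)
    next
      case 3 then show ?thesis using sh_dec[OF sh2, of "-y" "-x"] that by (simp add: FF_def)
    qed
  qed
  show False using lt[of s t] lt[of t s] assms ne by (cases s t rule: linorder_cases) auto
qed

lemma pencil_LE:
  assumes a: "a > 0"
    and sl: "s = a * Fd f1 f2 (u+b)"
    and pL: "(Fin u, Fin v) \<in> curve_line s t" and pE: "(Fin u, Fin v) \<in> curve_fabc f1 f2 a b c"
    and qL: "q \<in> curve_line s t" and qE: "q \<in> curve_fabc f1 f2 a b c"
    and np: "\<not> parallel q (Fin u, Fin v)"
  shows False
proof -
  obtain q1 q2 where q: "q = (q1, q2)" by force
  show False
  proof (cases q1)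
    case Infty
    then show False using qL qE q by (cases q2) auto
  next
    case (Fin w)
    then obtain y where y: "q2 = Fin y" using qL q by (cases q2) auto
    have wu: "w \<noteq> u" using np q Fin by (auto simp: parallel_def)
    have ub: "u + b \<noteq> 0" using pE by auto
    have wb: "(u + b) + (w - u) \<noteq> 0" using qE q Fin y by auto
    have l1: "y = s * w + t" "v = s * u + t" using qL pL q Fin y by auto
    have e1: "y = a * FF f1 f2 ((u+b) + (w-u)) + c" "v = a * FF f1 f2 (u+b) + c"
      using qE pE q Fin y by (auto simp: fabc_FF algebra_simps)
    have "a * (FF f1 f2 ((u+b) + (w-u)) - FF f1 f2 (u+b)) = a * (Fd f1 f2 (u+b) * (w - u))"
      using l1 e1 sl by (simp add: algebra_simps)
    then have "FF f1 f2 ((u+b) + (w-u)) - FF f1 f2 (u+b) = Fd f1 f2 (u+b) * (w - u)"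
      using a by simp
    then have "Phi f1 f2 (w-u) (u+b) = w - u"
      using Fd_neg[OF sh1 sh2 ub] unfolding Phi_def by simp
    then show False using Phi_ne[OF sh1 sh2, of "w-u" "u+b"] wu ub wb by simp
  qed
qed

lemma pencil_EE:
  assumes a1: "a1 > 0" and a2: "a2 > 0"
    and sl: "a1 * Fd f1 f2 (u+b1) = a2 * Fd f1 f2 (u+b2)"
    and p1: "(Fin u, Fin v) \<in> curve_fabc f1 f2 a1 b1 c1" and p2: "(Fin u, Fin v) \<in> curve_fabc f1 f2 a2 b2 c2"
    and q1: "q \<in> curve_fabc f1 f2 a1 b1 c1" and q2: "q \<in> curve_fabc f1 f2 a2 b2 c2"
    and np: "\<not> parallel q (Fin u, Fin v)"
  shows "curve_fabc f1 f2 a1 b1 c1 = curve_fabc f1 f2 a2 b2 c2"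
proof -
  have ub: "u + b1 \<noteq> 0" "u + b2 \<noteq> 0" using p1 p2 by auto
  have Fn: "Fd f1 f2 (u+b1) < 0" "Fd f1 f2 (u+b2) < 0" using Fd_neg[OF sh1 sh2] ub by auto
  define m where "m = a1 * Fd f1 f2 (u+b1)"
  have m: "m < 0" using a1 Fn by (simp add: m_def mult_pos_neg)
  have m1: "a1 = m / Fd f1 f2 (u+b1)" using Fn by (simp add: m_def)
  have m2: "a2 = m / Fd f1 f2 (u+b2)" using Fn sl by (simp add: m_def)
  have v1: "v = a1 * FF f1 f2 (u+b1) + c1" and v2: "v = a2 * FF f1 f2 (u+b2) + c2"
    using p1 p2 by (auto simp: fabc_FF)
  have bb: "b1 = b2"
  proof -
    obtain r1 r2 where q: "q = (r1, r2)" by force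
    show ?thesis
    proof (cases r1)
      case Infty
      then obtain y where y: "r2 = Fin y" using q1 q by (cases r2) auto
      have c: "c1 = y" "c2 = y" using q1 q2 q Infty y by auto
      have "m * (FF f1 f2 (u+b1) / Fd f1 f2 (u+b1)) = m * (FF f1 f2 (u+b2) / Fd f1 f2 (u+b2))"
        using v1 v2 c m1 m2 by simp
      then have "FF f1 f2 (u+b1) / Fd f1 f2 (u+b1) = FF f1 f2 (u+b2) / Fd f1 f2 (u+b2)"
        using m by (simp only: mult_cancel_left) simp
      then show ?thesis using Q_inj[OF sh1 sh2 ub] by simp
    next
      case (Fin w)
      show ?thesis
      proof (cases r2)
        case Infty
        then show ?thesis using q1 q2 q Fin by auto
      next
        case (Fin y)
        have wu: "w \<noteq> u" using np q \<open>r1 = Fin w\<close> by (auto simp: parallel_def)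
        have wb: "(u+b1) + (w-u) \<noteq> 0" "(u+b2) + (w-u) \<noteq> 0" using q1 q2 q \<open>r1 = Fin w\<close> Fin by auto
        have y1: "y = a1 * FF f1 f2 ((u+b1) + (w-u)) + c1" and y2: "y = a2 * FF f1 f2 ((u+b2) + (w-u)) + c2"
          using q1 q2 q \<open>r1 = Fin w\<close> Fin by (auto simp: fabc_FF algebra_simps)
        have "y - v = m * Phi f1 f2 (w-u) (u+b1)"
          using y1 v1 m1 Fn unfolding Phi_def by (simp add: field_simps)
        moreover have "y - v = m * Phi f1 f2 (w-u) (u+b2)"
          using y2 v2 m2 Fn unfolding Phi_def by (simp add: field_simps)
        ultimately have "Phi f1 f2 (w-u) (u+b1) = Phi f1 f2 (w-u) (u+b2)" using m by simp
        then show ?thesis using Phi_inj[OF sh1 sh2, of "w-u" "u+b1" "u+b2"] wu ub wb by simp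
      qed
    qed
  qed
  have aa: "a1 = a2" using m1 m2 bb by simp
  have cc: "c1 = c2" using v1 v2 aa bb by simp
  show ?thesis using aa bb cc by simp
qed

lemma line_touch:
  assumes only: "\<And>z. z \<in> curve_line s t \<Longrightarrow> z \<in> curve_line s' t' \<Longrightarrow> z = (Infty, Infty)"
  shows "s = s'"
proof (rule ccontr)
  assume ne: "s \<noteq> s'"
  define x where "x = (t' - t) / (s - s')"
  have "s * x + t = s' * x + t'" using ne by (simp add: x_def field_simps)
  then show False using only[of "(Fin x, Fin (s * x + t))"] by simp
qed

lemma finite_case:
  assumes C: "C \<in> Cminus f1 f2" and pC: "(Fin u, Fin v) \<in> C"
    and D1: "D1 \<in> Cminus f1 f2" and D2: "D2 \<in> Cminus f1 f2"
    and pD1: "(Fin u, Fin v) \<in> D1" and pD2: "(Fin u, Fin v) \<in> D2"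
    and qD1: "q \<in> D1" and qD2: "q \<in> D2"
    and only1: "\<And>z. z \<in> C \<Longrightarrow> z \<in> D1 \<Longrightarrow> z = (Fin u, Fin v)"
    and only2: "\<And>z. z \<in> C \<Longrightarrow> z \<in> D2 \<Longrightarrow> z = (Fin u, Fin v)"
    and np: "\<not> parallel q (Fin u, Fin v)"
  shows "D1 = D2"
proof -
  define SL where "SL D m \<longleftrightarrow> (\<exists>s t. D = curve_line s t \<and> s = m) \<or>
      (\<exists>a b c. a > 0 \<and> D = curve_fabc f1 f2 a b c \<and> a * Fd f1 f2 (u+b) = m)" for D m
  obtain m where hm: "\<And>D. D \<in> Cminus f1 f2 \<Longrightarrow> (Fin u, Fin v) \<in> D \<Longrightarrow>
      (\<And>z. z \<in> C \<Longrightarrow> z \<in> D \<Longrightarrow> z = (Fin u, Fin v)) \<Longrightarrow> SL D m"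
  proof -
    from C show ?thesis
    proof (cases rule: Cminus_cases)
      case (1 a b c)
      show ?thesis
      proof (rule that[of "a * Fd f1 f2 (u+b)"])
        fix D assume D: "D \<in> Cminus f1 f2" and pD: "(Fin u, Fin v) \<in> D"
          and on: "\<And>z. z \<in> C \<Longrightarrow> z \<in> D \<Longrightarrow> z = (Fin u, Fin v)"
        from D show "SL D (a * Fd f1 f2 (u+b))"
        proof (cases rule: Cminus_cases)
          case (1 a' b' c')
          have "a * Fd f1 f2 (u+b) = a' * Fd f1 f2 (u+b')"
            by (rule touch_EE[OF sh1 sh2 \<open>a > 0\<close> \<open>a' > 0\<close>]) (use pC pD on 1 \<open>C = _\<close> in auto)
          then show ?thesis unfolding SL_def using 1 by auto
        next
          case (2 s t)
          have "s = a * Fd f1 f2 (u+b)"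
            by (rule touch_LE[OF sh1 sh2 \<open>a > 0\<close> \<open>s < 0\<close>]) (use pC pD on 2 \<open>C = _\<close> in auto)
          then show ?thesis unfolding SL_def using 2 by auto
        qed
      qed
    next
      case (2 s t)
      show ?thesis
      proof (rule that[of s])
        fix D assume D: "D \<in> Cminus f1 f2" and pD: "(Fin u, Fin v) \<in> D"
          and on: "\<And>z. z \<in> C \<Longrightarrow> z \<in> D \<Longrightarrow> z = (Fin u, Fin v)"
        from D show "SL D s"
        proof (cases rule: Cminus_cases)
          case (1 a' b' c')
          have "s = a' * Fd f1 f2 (u+b')"
            by (rule touch_LE[OF sh1 sh2 \<open>a' > 0\<close> \<open>s < 0\<close>]) (use pC pD on 1 \<open>C = _\<close> in auto)
          then show ?thesis unfolding SL_def using 1 by auto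
        next
          case (2 s' t')
          have "(Infty, Infty) = (Fin u, Fin v)" using on[of "(Infty, Infty)"] 2 \<open>C = _\<close> by simp
          then show ?thesis by simp
        qed
      qed
    qed
  qed
  have S1: "SL D1 m" using hm[OF D1 pD1 only1] .
  have S2: "SL D2 m" using hm[OF D2 pD2 only2] .
  show ?thesis
  proof (cases "\<exists>s t. D1 = curve_line s t \<and> s = m")
    case True
    then obtain t1 where d1: "D1 = curve_line m t1" by blast
    show ?thesis
    proof (cases "\<exists>s t. D2 = curve_line s t \<and> s = m")
      case True
      then obtain t2 where d2: "D2 = curve_line m t2" by blast
      have "t1 = t2" using pD1 pD2 d1 d2 by simp
      then show ?thesis using d1 d2 by simp
    next
      case False
      then obtain a b c where d2: "a > 0" "D2 = curve_fabc f1 f2 a b c" "a * Fd f1 f2 (u+b) = m"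
        using S2 unfolding SL_def by blast
      have False
        by (rule pencil_LE[OF d2(1) d2(3)[symmetric], where v=v and t=t1 and c=c and q=q]) (use pD1 pD2 qD1 qD2 d1 d2 np in auto)
      then show ?thesis ..
    qed
  next
    case False
    then obtain a1 b1 c1 where d1: "a1 > 0" "D1 = curve_fabc f1 f2 a1 b1 c1" "a1 * Fd f1 f2 (u+b1) = m"
      using S1 unfolding SL_def by blast
    show ?thesis
    proof (cases "\<exists>s t. D2 = curve_line s t \<and> s = m")
      case True
      then obtain t2 where d2: "D2 = curve_line m t2" by blast
      have False
        by (rule pencil_LE[OF d1(1) d1(3)[symmetric], where v=v and t=t2 and c=c1 and q=q]) (use pD1 pD2 qD1 qD2 d1 d2 np in auto)
      then show ?thesis ..
    next
      case False
      then obtain a2 b2 c2 where d2: "a2 > 0" "D2 = curve_fabc f1 f2 a2 b2 c2" "a2 * Fd f1 f2 (u+b2) = m"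
        using S2 unfolding SL_def by blast
      show ?thesis unfolding d1(2) d2(2)
        by (rule pencil_EE[OF d1(1) d2(1), where u=u and v=v and q=q]) (use pD1 pD2 qD1 qD2 d1 d2 np in auto)
    qed
  qed
qed

end

theorem theorem4p14:
  fixes f1 f2 :: "real \<Rightarrow> real" and C :: "point set" and p q :: point
  assumes "strongly_hyperbolic f1" and "strongly_hyperbolic f2"
    and "C \<in> Cminus f1 f2" and "p \<in> C" and "q \<notin> C" and "\<not> parallel q p"
  shows "\<forall>D1 \<in> Cminus f1 f2. \<forall>D2 \<in> Cminus f1 f2.
           p \<in> D1 \<and> q \<in> D1 \<and> C \<inter> D1 = {p} \<and>
           p \<in> D2 \<and> q \<in> D2 \<and> C \<inter> D2 = {p} \<longrightarrow> D1 = D2"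
proof (intro ballI impI)
  note sh1 = assms(1) and sh2 = assms(2) and C = assms(3) and pC = assms(4) and np = assms(6)
  fix D1 D2
  assume D1: "D1 \<in> Cminus f1 f2" and D2: "D2 \<in> Cminus f1 f2"
  assume H: "p \<in> D1 \<and> q \<in> D1 \<and> C \<inter> D1 = {p} \<and> p \<in> D2 \<and> q \<in> D2 \<and> C \<inter> D2 = {p}"
  have pD1: "p \<in> D1" and qD1: "q \<in> D1" and pD2: "p \<in> D2" and qD2: "q \<in> D2" using H by auto
  have only1: "\<And>z. z \<in> C \<Longrightarrow> z \<in> D1 \<Longrightarrow> z = p" using H by blast
  have only2: "\<And>z. z \<in> C \<Longrightarrow> z \<in> D2 \<Longrightarrow> z = p" using H by blast
  obtain p1 p2 where p: "p = (p1, p2)" by force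
  obtain q1 q2 where q: "q = (q1, q2)" by force
  show "D1 = D2"
  proof (cases p1)
    case Infty
    show ?thesis
    proof (cases p2)
      case Infty
      have pp: "p = (Infty, Infty)" using p \<open>p1 = Infty\<close> Infty by simp
      obtain x y where qq: "q = (Fin x, Fin y)"
        using np pp q by (cases q1; cases q2) (auto simp: parallel_def)
      from C obtain s t where Ct: "C = curve_line s t"
        by (cases rule: Cminus_cases) (use pC pp in auto)
      from D1 obtain s1 t1 where d1: "D1 = curve_line s1 t1"
        by (cases rule: Cminus_cases) (use pD1 pp in auto)
      from D2 obtain s2 t2 where d2: "D2 = curve_line s2 t2"
        by (cases rule: Cminus_cases) (use pD2 pp in auto)
      have "s = s1" by (rule line_touch[OF sh1 sh2 only1[unfolded Ct d1 pp]])
      moreover have "s = s2" by (rule line_touch[OF sh1 sh2 only2[unfolded Ct d2 pp]])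
      ultimately have "t1 = t2" using qD1 qD2 d1 d2 qq by simp
      then show ?thesis using d1 d2 \<open>s = s1\<close> \<open>s = s2\<close> by simp
    next
      case (Fin v)
      have pp: "p = (Infty, Fin v)" using p \<open>p1 = Infty\<close> Fin by simp
      from C obtain a b where a: "a > 0" and Ct: "C = curve_fabc f1 f2 a b v"
        by (cases rule: Cminus_cases) (use pC pp in auto)
      from D1 obtain a1 b1 where a1: "a1 > 0" and d1: "D1 = curve_fabc f1 f2 a1 b1 v"
        by (cases rule: Cminus_cases) (use pD1 pp in auto)
      from D2 obtain a2 b2 where a2: "a2 > 0" and d2: "D2 = curve_fabc f1 f2 a2 b2 v"
        by (cases rule: Cminus_cases) (use pD2 pp in auto)
      have "a = a1" by (rule touch_IF[OF sh1 sh2 a a1 only1[unfolded Ct d1 pp]])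
      moreover have "a = a2" by (rule touch_IF[OF sh1 sh2 a a2 only2[unfolded Ct d2 pp]])
      moreover have "b1 = b2"
      proof (cases q1)
        case Infty
        then show ?thesis using np pp q by (auto simp: parallel_def)
      next
        case (Fin x)
        show ?thesis
        proof (cases q2)
          case Infty
          then show ?thesis using qD1 qD2 d1 d2 q Fin by simp
        next
          case (Fin y)
          have xb: "x + b1 \<noteq> 0" "x + b2 \<noteq> 0" using qD1 qD2 d1 d2 q \<open>q1 = Fin x\<close> Fin by auto
          have "a1 * FF f1 f2 (x + b1) = a2 * FF f1 f2 (x + b2)"
            using qD1 qD2 d1 d2 q \<open>q1 = Fin x\<close> Fin by (auto simp: fabc_FF)
          then have "FF f1 f2 (x + b1) = FF f1 f2 (x + b2)" using \<open>a = a1\<close> \<open>a = a2\<close> a by simp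
          then show ?thesis using FF_inj[OF sh1 sh2 xb] by simp
        qed
      qed
      ultimately show ?thesis using d1 d2 by simp
    qed
  next
    case (Fin u)
    show ?thesis
    proof (cases p2)
      case Infty
      have pp: "p = (Fin u, Infty)" using p \<open>p1 = Fin u\<close> Infty by simp
      from C obtain a b c where a: "a > 0" and Ct: "C = curve_fabc f1 f2 a b c" and ub: "u = -b"
        by (cases rule: Cminus_cases) (use pC pp in auto)
      from D1 obtain a1 c1 where a1: "a1 > 0" and d1: "D1 = curve_fabc f1 f2 a1 b c1"
        by (cases rule: Cminus_cases) (use pD1 pp ub in auto)
      from D2 obtain a2 c2 where a2: "a2 > 0" and d2: "D2 = curve_fabc f1 f2 a2 b c2"
        by (cases rule: Cminus_cases) (use pD2 pp ub in auto)
      have "a = a1" by (rule touch_FI[OF sh1 sh2 a a1 only1[unfolded Ct d1 pp ub]])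
      moreover have "a = a2" by (rule touch_FI[OF sh1 sh2 a a2 only2[unfolded Ct d2 pp ub]])
      moreover have "c1 = c2"
      proof (cases q1)
        case Infty
        then obtain y where "q2 = Fin y" using np pp q by (cases q2) (auto simp: parallel_def)
        then show ?thesis using qD1 qD2 d1 d2 q Infty by simp
      next
        case (Fin x)
        then obtain y where y: "q2 = Fin y" using np pp q by (cases q2) (auto simp: parallel_def)
        have "a1 * FF f1 f2 (x + b) + c1 = a2 * FF f1 f2 (x + b) + c2"
          using qD1 qD2 d1 d2 q Fin y by (auto simp: fabc_FF)
        then show ?thesis using \<open>a = a1\<close> \<open>a = a2\<close> by simp
      qed
      ultimately show ?thesis using d1 d2 by simp
    next
      case (Fin v)
      have pp: "p = (Fin u, Fin v)" using p \<open>p1 = Fin u\<close> Fin by simp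
      show ?thesis
        by (rule finite_case[OF sh1 sh2 C pC[unfolded pp] D1 D2 pD1[unfolded pp] pD2[unfolded pp] qD1 qD2 only1[unfolded pp] only2[unfolded pp] np[unfolded pp]])
    qed
  qed
qed

end
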